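(* Let $V$ be a poset, $m$ a maximal node of $V$ of positive height, and $U$ a splitting of $V$ at $m$ with splitting map $\varphi$. Suppose $U\cong\operatorname{Spec}R$ (as posets) for some commutative Noetherian ring $R$ such that $R/M\cong R/N$ for all maximal ideals $M,N$ of $R$. Then there exists a Noetherian subring $L\subseteq R$ with $\operatorname{Spec}L\cong V$.
   Context: Splitting: for a poset $V$ with a maximal node $m$ of positive height (height = supremum of lengths of chains below the node), a poset $U$ is a splitting of $V$ at $m$ with splitting map $\varphi$ if $\varphi:U\to V$ is surjective order-preserving, there is a finite nonempty set $\mathcal M\subseteq\max U$ of positive-height nodes with $\varphi^{-1}(m)=\mathcal M$, $|\varphi^{-1}(v)|=1$ for $v\ne m$, and whenever $\varphi(x')=x\le y$ there is $y'\ge x'$ with $\varphi(y')=y$. Spectra are ordered by inclusion; $\cong$ means order isomorphism. *)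

theory Defs
  imports "HOL-Algebra.Ring_Divisibility" "HOL-Algebra.QuotRing" "HOL-Algebra.Subrings"
    "HOL-Library.Extended_Nat"
begin

definition is_poset :: "'a set \<Rightarrow> ('a \<Rightarrow> 'a \<Rightarrow> bool) \<Rightarrow> bool" where
  "is_poset A ord \<longleftrightarrow>
     (\<forall>x\<in>A. ord x x) \<and>
     (\<forall>x\<in>A. \<forall>y\<in>A. ord x y \<and> ord y x \<longrightarrow> x = y) \<and>
     (\<forall>x\<in>A. \<forall>y\<in>A. \<forall>z\<in>A. ord x y \<and> ord y z \<longrightarrow> ord x z)"

definition is_maximal_node :: "'a set \<Rightarrow> ('a \<Rightarrow> 'a \<Rightarrow> bool) \<Rightarrow> 'a \<Rightarrow> bool" where
  "is_maximal_node A ord x \<longleftrightarrow> x \<in> A \<and> (\<forall>y\<in>A. ord x y \<longrightarrow> y = x)"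

definition chain_below :: "'a set \<Rightarrow> ('a \<Rightarrow> 'a \<Rightarrow> bool) \<Rightarrow> 'a \<Rightarrow> nat \<Rightarrow> bool" where
  "chain_below A ord x n \<longleftrightarrow>
     (\<exists>c :: nat \<Rightarrow> 'a. (\<forall>i\<le>n. c i \<in> A) \<and> (\<forall>i<n. ord (c i) (c (Suc i)) \<and> c i \<noteq> c (Suc i))
        \<and> c n = x)"

definition node_height :: "'a set \<Rightarrow> ('a \<Rightarrow> 'a \<Rightarrow> bool) \<Rightarrow> 'a \<Rightarrow> enat" where
  "node_height A ord x = Sup {enat n | n. chain_below A ord x n}"

definition poset_iso :: "'a set \<Rightarrow> ('a \<Rightarrow> 'a \<Rightarrow> bool) \<Rightarrow> 'b set \<Rightarrow> ('b \<Rightarrow> 'b \<Rightarrow> bool) \<Rightarrow> bool" where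
  "poset_iso A leA B leB \<longleftrightarrow>
     (\<exists>f. bij_betw f A B \<and> (\<forall>x\<in>A. \<forall>y\<in>A. leA x y \<longleftrightarrow> leB (f x) (f y)))"

definition is_splitting ::
  "'v set \<Rightarrow> ('v \<Rightarrow> 'v \<Rightarrow> bool) \<Rightarrow> 'v \<Rightarrow> 'u set \<Rightarrow> ('u \<Rightarrow> 'u \<Rightarrow> bool) \<Rightarrow> ('u \<Rightarrow> 'v) \<Rightarrow> bool" where
  "is_splitting V leV m U leU \<phi> \<longleftrightarrow>
     is_poset U leU \<and>
     \<phi> ` U = V \<and>
     (\<forall>x\<in>U. \<forall>y\<in>U. leU x y \<longrightarrow> leV (\<phi> x) (\<phi> y)) \<and>
     (\<exists>M. finite M \<and> M \<noteq> {} \<and>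
        (\<forall>x\<in>M. is_maximal_node U leU x \<and> node_height U leU x > 0) \<and>
        {x\<in>U. \<phi> x = m} = M) \<and>
     (\<forall>v\<in>V. v \<noteq> m \<longrightarrow> card {x\<in>U. \<phi> x = v} = 1) \<and>
     (\<forall>x'\<in>U. \<forall>y\<in>V. leV (\<phi> x') y \<longrightarrow> (\<exists>y'\<in>U. leU x' y' \<and> \<phi> y' = y))"

(* prime spectrum, ordered by inclusion *)
definition Spec :: "('a, 'b) ring_scheme \<Rightarrow> 'a set set" where
  "Spec R = {P. primeideal P R}"

end

theory Submission imports Defs begin

lemma ring_hom_comp_my:
  "f \<in> ring_hom R S \<Longrightarrow> g \<in> ring_hom S T \<Longrightarrow> (\<lambda>x. g (f x)) \<in> ring_hom R T"
  unfolding ring_hom_def by (auto simp: Pi_def)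

locale glue = noetherian_ring R + cring R for R (structure) +
  fixes Ms :: "'a set set" and M0 :: "'a set" and \<theta> :: "'a set \<Rightarrow> 'a set \<Rightarrow> 'a set"
  assumes Ms_fin: "finite Ms" and M0: "M0 \<in> Ms"
    and Ms_max: "\<And>N. N \<in> Ms \<Longrightarrow> maximalideal N R"
    and th_iso: "\<And>N. N \<in> Ms \<Longrightarrow> \<theta> N \<in> ring_iso (R Quot N) (R Quot M0)"
    and th_M0: "\<And>x. \<theta> M0 x = x"
begin

definition "II = \<Inter>Ms"
definition "q N a = \<theta> N (N +> a)"
definition "AA = {a \<in> carrier R. \<forall>N\<in>Ms. q N a = M0 +> a}"

lemma Ms_ideal: "N \<in> Ms \<Longrightarrow> ideal N R"
  using Ms_max maximalideal.axioms(1) by blast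

lemma q_hom: "N \<in> Ms \<Longrightarrow> q N \<in> ring_hom R (R Quot M0)"
  unfolding q_def
  apply (rule ring_hom_comp_my[OF ideal.rcos_ring_hom[OF Ms_ideal]], assumption)
  using th_iso unfolding ring_iso_def by auto

lemma quot_ring: "N \<in> Ms \<Longrightarrow> ring (R Quot N)"
  using Ms_ideal ideal.quotient_is_ring by blast

lemma q_M0: "q M0 a = M0 +> a"
  by (simp add: q_def th_M0)

lemma q_hom_ring: "N \<in> Ms \<Longrightarrow> ring_hom_ring R (R Quot M0) (q N)"
  using q_hom quot_ring M0 ring_hom_ringI2 ring_axioms by blast

lemma AA_subring: "subring AA R"
proof (rule subringI)
  show "AA \<subseteq> carrier R" unfolding AA_def by auto
  show "\<one> \<in> AA" unfolding AA_def
  proof (intro CollectI conjI ballI)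
    fix N assume N: "N \<in> Ms"
    have "q N \<one> = \<one>\<^bsub>R Quot M0\<^esub>" using ring_hom_one[OF q_hom[OF N]] .
    also have "\<dots> = q M0 \<one>" using ring_hom_one[OF q_hom[OF M0]] by simp
    finally show "q N \<one> = M0 +> \<one>" by (simp add: q_M0)
  qed simp
  fix h assume h: "h \<in> AA"
  show "\<ominus> h \<in> AA" unfolding AA_def
  proof (intro CollectI conjI ballI)
    show "\<ominus> h \<in> carrier R" using h unfolding AA_def by auto
    fix N assume N: "N \<in> Ms"
    interpret H: ring_hom_ring R "R Quot M0" "q N" using q_hom_ring[OF N] .
    interpret H0: ring_hom_ring R "R Quot M0" "q M0" using q_hom_ring[OF M0] .
    have "q N (\<ominus> h) = \<ominus>\<^bsub>R Quot M0\<^esub> q N h"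
      using H.hom_a_inv h unfolding AA_def by auto
    also have "\<dots> = \<ominus>\<^bsub>R Quot M0\<^esub> q M0 h" using h N unfolding AA_def q_M0 by auto
    also have "\<dots> = q M0 (\<ominus> h)"
      using H0.hom_a_inv h unfolding AA_def by auto
    finally show "q N (\<ominus> h) = M0 +> \<ominus> h" by (simp add: q_M0)
  qed
next
  fix h1 h2 assume h: "h1 \<in> AA" "h2 \<in> AA"
  show "h1 \<otimes> h2 \<in> AA" unfolding AA_def
  proof (intro CollectI conjI ballI)
    show "h1 \<otimes> h2 \<in> carrier R" using h unfolding AA_def by auto
    fix N assume N: "N \<in> Ms"
    have "q N (h1 \<otimes> h2) = q N h1 \<otimes>\<^bsub>R Quot M0\<^esub> q N h2"
      using ring_hom_mult[OF q_hom[OF N]] h unfolding AA_def by auto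
    also have "\<dots> = q M0 h1 \<otimes>\<^bsub>R Quot M0\<^esub> q M0 h2" using h N unfolding AA_def q_M0 by auto
    also have "\<dots> = q M0 (h1 \<otimes> h2)"
      using ring_hom_mult[OF q_hom[OF M0]] h unfolding AA_def by auto
    finally show "q N (h1 \<otimes> h2) = M0 +> (h1 \<otimes> h2)" by (simp add: q_M0)
  qed
  show "h1 \<oplus> h2 \<in> AA" unfolding AA_def
  proof (intro CollectI conjI ballI)
    show "h1 \<oplus> h2 \<in> carrier R" using h unfolding AA_def by auto
    fix N assume N: "N \<in> Ms"
    have "q N (h1 \<oplus> h2) = q N h1 \<oplus>\<^bsub>R Quot M0\<^esub> q N h2"
      using ring_hom_add[OF q_hom[OF N]] h unfolding AA_def by auto
    also have "\<dots> = q M0 h1 \<oplus>\<^bsub>R Quot M0\<^esub> q M0 h2" using h N unfolding AA_def q_M0 by auto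
    also have "\<dots> = q M0 (h1 \<oplus> h2)"
      using ring_hom_add[OF q_hom[OF M0]] h unfolding AA_def by auto
    finally show "q N (h1 \<oplus> h2) = M0 +> (h1 \<oplus> h2)" by (simp add: q_M0)
  qed
qed

lemma coset_eq: "N \<in> Ms \<Longrightarrow> a \<in> carrier R \<Longrightarrow> b \<in> carrier R \<Longrightarrow> (N +> a = N +> b) = (a \<ominus> b \<in> N)"
  using quotient_eq_iff_same_a_r_cos[OF Ms_ideal] by blast

lemma coset_carrier: "N \<in> Ms \<Longrightarrow> a \<in> carrier R \<Longrightarrow> N +> a \<in> carrier (R Quot N)"
  using ring_hom_closed[OF ideal.rcos_ring_hom[OF Ms_ideal]] by blast

lemma quot_carrier_E: "N \<in> Ms \<Longrightarrow> x \<in> carrier (R Quot N) \<Longrightarrow> \<exists>y\<in>carrier R. x = N +> y"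
  unfolding FactRing_def A_RCOSETS_def' by auto

lemma q_eq: assumes N: "N \<in> Ms" and a: "a \<in> carrier R" and b: "b \<in> carrier R"
  shows "(q N a = q N b) = (a \<ominus> b \<in> N)"
proof -
  have "inj_on (\<theta> N) (carrier (R Quot N))"
    using th_iso[OF N] unfolding ring_iso_def bij_betw_def by auto
  then have "(q N a = q N b) = (N +> a = N +> b)"
    unfolding q_def using coset_carrier[OF N a] coset_carrier[OF N b] inj_on_eq_iff by metis
  then show ?thesis using coset_eq[OF N a b] by simp
qed

lemma q_zero: "N \<in> Ms \<Longrightarrow> q N \<zero> = \<zero>\<^bsub>R Quot M0\<^esub>"
proof -
  assume N: "N \<in> Ms"
  interpret H: ring_hom_ring R "R Quot M0" "q N" using q_hom_ring[OF N] .
  show ?thesis by simp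
qed

lemma q_zero_iff: "N \<in> Ms \<Longrightarrow> a \<in> carrier R \<Longrightarrow> (q N a = \<zero>\<^bsub>R Quot M0\<^esub>) = (a \<in> N)"
  using q_eq[of N a \<zero>] q_zero[of N] by (simp add: a_minus_def)

lemma Ms_sub: "N \<in> Ms \<Longrightarrow> N \<subseteq> carrier R"
  by (rule additive_subgroup.a_subset[OF ideal.axioms(1)[OF Ms_ideal]])

lemma idcarr: "ideal P R \<Longrightarrow> P \<subseteq> carrier R"
  by (rule additive_subgroup.a_subset[OF ideal.axioms(1)])

lemma Ms_neg: "N \<in> Ms \<Longrightarrow> x \<in> N \<Longrightarrow> \<ominus> x \<in> N"
  by (rule additive_subgroup.a_inv_closed[OF ideal.axioms(1)[OF Ms_ideal]])

lemma Ms_add: "N \<in> Ms \<Longrightarrow> x \<in> N \<Longrightarrow> y \<in> N \<Longrightarrow> x \<oplus> y \<in> N"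
  by (rule additive_subgroup.a_closed[OF ideal.axioms(1)[OF Ms_ideal]])

lemma AA_carr: "AA \<subseteq> carrier R" unfolding AA_def by auto

lemma AA_mem: "a \<in> AA \<Longrightarrow> N \<in> Ms \<Longrightarrow> q N a = q M0 a"
  unfolding AA_def q_M0 by auto

lemma II_ideal: "ideal II R"
  unfolding II_def using i_Intersect Ms_ideal M0 by blast

lemma II_carr: "II \<subseteq> carrier R"
  by (rule additive_subgroup.a_subset[OF ideal.axioms(1)[OF II_ideal]])

lemma II_sub_AA: "II \<subseteq> AA"
proof
  fix a assume a: "a \<in> II"
  then have ac: "a \<in> carrier R" using II_carr by auto
  have "q N a = M0 +> a" if N: "N \<in> Ms" for N
  proof -
    have "q N a = \<zero>\<^bsub>R Quot M0\<^esub>" using q_zero_iff[OF N ac] a N unfolding II_def by auto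
    also have "\<dots> = q M0 a" using q_zero_iff[OF M0 ac] a M0 unfolding II_def by auto
    finally show ?thesis by (simp add: q_M0)
  qed
  then show "a \<in> AA" unfolding AA_def using ac by auto
qed

lemma AA_in_one: assumes a: "a \<in> AA" and N: "N \<in> Ms" and aN: "a \<in> N"
  shows "a \<in> II"
  unfolding II_def
proof
  fix N' assume N': "N' \<in> Ms"
  have ac: "a \<in> carrier R" using a AA_carr by auto
  have "q N' a = q N a" using AA_mem[OF a N] AA_mem[OF a N'] by simp
  also have "\<dots> = \<zero>\<^bsub>R Quot M0\<^esub>" using q_zero_iff[OF N ac] aN by simp
  finally show "a \<in> N'" using q_zero_iff[OF N' ac] by simp
qed

lemma II_sub: "N \<in> Ms \<Longrightarrow> II \<subseteq> N" unfolding II_def by auto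

lemma set_add_mem: "p \<in> P \<Longrightarrow> n \<in> N \<Longrightarrow> p \<oplus> n \<in> P <+>\<^bsub>R\<^esub> N"
  unfolding set_add_def' by blast

lemma comax_step:
  assumes P: "ideal P R" and N: "N \<in> Ms" and nsub: "\<not> P \<subseteq> N"
  shows "\<exists>p\<in>P. \<exists>c\<in>N. \<one> = p \<oplus> c"
proof -
  have id: "ideal (P <+>\<^bsub>R\<^esub> N) R" using add_ideals[OF P Ms_ideal[OF N]] .
  have z1: "\<zero> \<in> P" using P ideal.axioms(1) additive_subgroup.zero_closed by blast
  have z2: "\<zero> \<in> N" using Ms_ideal[OF N] ideal.axioms(1) additive_subgroup.zero_closed by blast
  have "N \<subseteq> P <+>\<^bsub>R\<^esub> N"
  proof
    fix x assume x: "x \<in> N"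
    then have "\<zero> \<oplus> x \<in> P <+>\<^bsub>R\<^esub> N" using set_add_mem z1 by blast
    moreover have "\<zero> \<oplus> x = x" using x Ms_sub[OF N] by auto
    ultimately show "x \<in> P <+>\<^bsub>R\<^esub> N" by simp
  qed
  moreover have "P <+>\<^bsub>R\<^esub> N \<subseteq> carrier R"
    by (rule additive_subgroup.a_subset[OF ideal.axioms(1)[OF id]])
  ultimately have "P <+>\<^bsub>R\<^esub> N = N \<or> P <+>\<^bsub>R\<^esub> N = carrier R"
    by (rule maximalideal.I_maximal[OF Ms_max[OF N] id])
  moreover have "P <+>\<^bsub>R\<^esub> N \<noteq> N"
  proof
    assume e: "P <+>\<^bsub>R\<^esub> N = N"
    have "P \<subseteq> P <+>\<^bsub>R\<^esub> N"
    proof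
      fix x assume x: "x \<in> P"
      then have "x \<oplus> \<zero> \<in> P <+>\<^bsub>R\<^esub> N" using set_add_mem z2 by blast
      moreover have "x \<oplus> \<zero> = x" using x additive_subgroup.a_subset[OF ideal.axioms(1)[OF P]] by auto
      ultimately show "x \<in> P <+>\<^bsub>R\<^esub> N" by simp
    qed
    then show False using e nsub by auto
  qed
  ultimately have "\<one> \<in> P <+>\<^bsub>R\<^esub> N" by auto
  then show ?thesis unfolding set_add_def' by auto
qed

lemma comax_fin:
  assumes P: "ideal P R" and S: "finite S" "S \<subseteq> Ms"
    and h: "\<forall>N\<in>S. \<exists>p\<in>P. \<exists>c\<in>N. \<one> = p \<oplus> c"
  shows "\<exists>p\<in>P. \<exists>c\<in>carrier R. (\<forall>N\<in>S. c \<in> N) \<and> \<one> = p \<oplus> c"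
  using S h
proof (induction S rule: finite_induct)
  case empty
  have "\<zero> \<in> P" using P ideal.axioms(1) additive_subgroup.zero_closed by blast
  then show ?case by (intro bexI[of _ "\<zero>"] bexI[of _ "\<one>"]) auto
next
  case (insert N S)
  then obtain p c where pc: "p \<in> P" "c \<in> carrier R" "\<forall>N\<in>S. c \<in> N" "\<one> = p \<oplus> c" by auto
  obtain p' c' where pc': "p' \<in> P" "c' \<in> N" "\<one> = p' \<oplus> c'" using insert by auto
  have NM: "N \<in> Ms" using insert by auto
  have cs: "p \<in> carrier R" "p' \<in> carrier R" "c' \<in> carrier R"
    using pc pc' P ideal.Icarr Ms_sub[OF NM] by auto
  have e: "\<one> = (p \<otimes> (p' \<oplus> c') \<oplus> c \<otimes> p') \<oplus> c \<otimes> c'"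
  proof -
    have "(p \<oplus> c) \<otimes> (p' \<oplus> c') = \<one> \<otimes> \<one>" by (simp only: pc(4)[symmetric] pc'(3)[symmetric])
    then have "\<one> = (p \<oplus> c) \<otimes> (p' \<oplus> c')" by simp
    also have "\<dots> = (p \<otimes> (p' \<oplus> c') \<oplus> c \<otimes> p') \<oplus> c \<otimes> c'" using cs pc(2) by algebra
    finally show ?thesis .
  qed
  have h1: "p \<otimes> (p' \<oplus> c') \<oplus> c \<otimes> p' \<in> P"
    using P pc pc' cs ideal.I_l_closed ideal.I_r_closed additive_subgroup.a_closed ideal.axioms(1)
    by (metis add.m_closed)
  have h2: "\<forall>N'\<in>insert N S. c \<otimes> c' \<in> N'"
    using pc pc' cs ideal.I_l_closed ideal.I_r_closed Ms_ideal insert.prems NM insert.hyps by (metis insert_iff subsetD insert.prems)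
  have h3: "c \<otimes> c' \<in> carrier R" using pc cs by simp
  show ?case
    apply (rule bexI[OF _ h1])
    apply (rule bexI[OF _ h3])
    using h2 e by (rule conjI)
qed

lemma Ms_incomp: assumes N: "N \<in> Ms" and N': "N' \<in> Ms" and ne: "N \<noteq> N'"
  shows "\<not> N \<subseteq> N'"
proof
  assume "N \<subseteq> N'"
  then have "N' = N \<or> N' = carrier R"
    by (rule maximalideal.I_maximal[OF Ms_max[OF N] Ms_ideal[OF N']]) (rule Ms_sub[OF N'])
  then show False using ne maximalideal.I_notcarr[OF Ms_max[OF N']] by auto
qed

lemma crt:
  assumes S: "finite S" "S \<subseteq> Ms" and y: "\<And>N. N \<in> Ms \<Longrightarrow> y N \<in> carrier R"
  shows "\<exists>a\<in>carrier R. \<forall>N\<in>S. a \<ominus> y N \<in> N"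
  using S
proof (induction S rule: finite_induct)
  case empty
  then show ?case by auto
next
  case (insert N S)
  then obtain a where a: "a \<in> carrier R" "\<forall>N\<in>S. a \<ominus> y N \<in> N" by auto
  have NM: "N \<in> Ms" using insert by auto
  have "\<forall>N'\<in>S. \<exists>p\<in>N. \<exists>c\<in>N'. \<one> = p \<oplus> c"
    using comax_step[OF Ms_ideal[OF NM]] Ms_incomp NM insert by (metis subsetD insert_subset)
  then obtain p e where pe: "p \<in> N" "e \<in> carrier R" "\<forall>N'\<in>S. e \<in> N'" "\<one> = p \<oplus> e"
    using comax_fin[OF Ms_ideal[OF NM] insert(1)] insert by auto
  have yN: "y N \<in> carrier R" using y NM by auto
  have pc: "p \<in> carrier R" using pe Ms_sub[OF NM] by auto
  define a' where "a' = a \<oplus> e \<otimes> (y N \<ominus> a)"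
  have a'c: "a' \<in> carrier R" unfolding a'_def using a pe yN by auto
  have "a' \<ominus> y N' \<in> N'" if N': "N' \<in> S" for N'
  proof -
    have N'M: "N' \<in> Ms" using N' insert by auto
    have yN': "y N' \<in> carrier R" using y N'M by auto
    have "a' \<ominus> y N' = (a \<ominus> y N') \<oplus> e \<otimes> (y N \<ominus> a)" unfolding a'_def
      using a pe yN yN' by algebra
    moreover have "e \<otimes> (y N \<ominus> a) \<in> N'" using ideal.I_r_closed[OF Ms_ideal[OF N'M]] pe N' a yN by auto
    moreover have "a \<ominus> y N' \<in> N'" using a(2) N' by blast
    ultimately show ?thesis using Ms_add[OF N'M] by metis
  qed
  moreover have "a' \<ominus> y N \<in> N"
  proof -
    have "\<one> \<ominus> e = (p \<oplus> e) \<ominus> e" by (simp only: pe(4)[symmetric])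
    also have "\<dots> = p" using pc pe(2) by algebra
    finally have peq: "p = \<one> \<ominus> e" by simp
    have "a' \<ominus> y N = p \<otimes> (a \<ominus> y N)" unfolding a'_def peq
      using a pc yN pe(2) by algebra
    then show ?thesis using ideal.I_r_closed[OF Ms_ideal[OF NM]] pe a yN by auto
  qed
  ultimately show ?case using a'c by auto
qed

lemma surj_AA: assumes r: "r \<in> carrier R" and N1: "N1 \<in> Ms"
  shows "\<exists>b\<in>AA. b \<ominus> r \<in> N1"
proof -
  define t where "t = q N1 r"
  have tc: "t \<in> carrier (R Quot M0)" unfolding t_def using ring_hom_closed[OF q_hom[OF N1] r] .
  have "\<exists>y\<in>carrier R. q N y = t" if N: "N \<in> Ms" for N
  proof -
    have "\<theta> N ` carrier (R Quot N) = carrier (R Quot M0)"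
      using th_iso[OF N] unfolding ring_iso_def bij_betw_def by auto
    then obtain x where x: "x \<in> carrier (R Quot N)" "\<theta> N x = t" using tc by (metis imageE)
    then obtain y where "y \<in> carrier R" "x = N +> y" using quot_carrier_E[OF N] by blast
    then show ?thesis using x unfolding q_def by auto
  qed
  then obtain y where y: "\<And>N. N \<in> Ms \<Longrightarrow> y N \<in> carrier R \<and> q N (y N) = t" by metis
  obtain b where b: "b \<in> carrier R" "\<forall>N\<in>Ms. b \<ominus> y N \<in> N"
    using crt[OF Ms_fin subset_refl, of y] y by auto
  have qb: "q N b = t" if N: "N \<in> Ms" for N
    using q_eq[OF N b(1), of "y N"] y[OF N] b N by auto
  have "\<forall>N\<in>Ms. q N b = M0 +> b" using qb M0 q_M0 by metis
  then have "b \<in> AA" unfolding AA_def using b by auto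
  moreover have "b \<ominus> r \<in> N1" using q_eq[OF N1 b(1) r] qb[OF N1] t_def by auto
  ultimately show ?thesis by auto
qed

lemma field_AA: assumes a: "a \<in> AA" and na: "a \<notin> II"
  shows "\<exists>b\<in>AA. a \<otimes> b \<ominus> \<one> \<in> II"
proof -
  have ac: "a \<in> carrier R" using a AA_carr by auto
  have "\<forall>N\<in>Ms. \<exists>p\<in>PIdl a. \<exists>c\<in>N. \<one> = p \<oplus> c"
  proof
    fix N assume N: "N \<in> Ms"
    have "a \<notin> N" using AA_in_one[OF a N] na by auto
    moreover have "a \<in> PIdl a" using cgenideal_self[OF ac] .
    ultimately show "\<exists>p\<in>PIdl a. \<exists>c\<in>N. \<one> = p \<oplus> c"
      using comax_step[OF cgenideal_ideal[OF ac] N] by blast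
  qed
  then obtain p c where pc: "p \<in> PIdl a" "c \<in> carrier R" "\<forall>N\<in>Ms. c \<in> N" "\<one> = p \<oplus> c"
    using comax_fin[OF cgenideal_ideal[OF ac] Ms_fin subset_refl] by blast
  obtain b where b: "b \<in> carrier R" "p = b \<otimes> a" using pc(1) unfolding cgenideal_def by auto
  have abI: "a \<otimes> b \<ominus> \<one> \<in> II"
  proof -
    have "a \<otimes> b \<ominus> \<one> = a \<otimes> b \<ominus> (b \<otimes> a \<oplus> c)" using pc(4) b by simp
    also have "\<dots> = \<ominus> c" using b ac pc(2) by algebra
    finally have "a \<otimes> b \<ominus> \<one> = \<ominus> c" .
    moreover have "\<ominus> c \<in> II" using pc II_ideal unfolding II_def
      by (metis additive_subgroup.a_inv_closed ideal.axioms(1) II_def InterI)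
    ultimately show ?thesis by simp
  qed
  interpret Q: cring "R Quot M0" using ideal.quotient_is_cring[OF Ms_ideal[OF M0] is_cring] .
  have qab: "q N a \<otimes>\<^bsub>R Quot M0\<^esub> q N b = \<one>\<^bsub>R Quot M0\<^esub>" if N: "N \<in> Ms" for N
  proof -
    have "q N (a \<otimes> b) = q N \<one>" using q_eq[OF N _ one_closed, of "a \<otimes> b"] abI II_sub[OF N] ac b by auto
    then show ?thesis using ring_hom_mult[OF q_hom[OF N] ac b(1)] ring_hom_one[OF q_hom[OF N]] by simp
  qed
  have "b \<in> AA"
  proof -
    have "q N b = q M0 b" if N: "N \<in> Ms" for N
    proof -
      let ?u = "q M0 a"
      have uc: "?u \<in> carrier (R Quot M0)" using ring_hom_closed[OF q_hom[OF M0] ac] .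
      have v1: "q N b \<in> carrier (R Quot M0)" using ring_hom_closed[OF q_hom[OF N] b(1)] .
      have v2: "q M0 b \<in> carrier (R Quot M0)" using ring_hom_closed[OF q_hom[OF M0] b(1)] .
      have e1: "?u \<otimes>\<^bsub>R Quot M0\<^esub> q N b = \<one>\<^bsub>R Quot M0\<^esub>" using qab[OF N] AA_mem[OF a N] by simp
      have e2: "?u \<otimes>\<^bsub>R Quot M0\<^esub> q M0 b = \<one>\<^bsub>R Quot M0\<^esub>" using qab[OF M0] by simp
      have "q N b = (?u \<otimes>\<^bsub>R Quot M0\<^esub> q M0 b) \<otimes>\<^bsub>R Quot M0\<^esub> q N b" using e2 v1 by simp
      also have "\<dots> = q M0 b \<otimes>\<^bsub>R Quot M0\<^esub> (?u \<otimes>\<^bsub>R Quot M0\<^esub> q N b)"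
        using uc v1 v2 by (simp add: Q.m_assoc Q.m_lcomm)
      also have "\<dots> = q M0 b" using e1 v2 by simp
      finally show ?thesis .
    qed
    then show ?thesis unfolding AA_def using b q_M0 by auto
  qed
  then show ?thesis using abI by auto
qed


definition "chainS C \<longleftrightarrow> (\<forall>X\<in>C. \<forall>Y\<in>C. X \<subseteq> Y \<or> Y \<subseteq> X)"

lemma subset_chain_iff: "subset.chain A C \<longleftrightarrow> C \<subseteq> A \<and> chainS C"
  unfolding pred_on.chain_def chainS_def by blast

definition "amod Y \<longleftrightarrow> Y \<subseteq> carrier R \<and> \<zero> \<in> Y \<and> (\<forall>x\<in>Y. \<forall>y\<in>Y. x \<oplus> y \<in> Y) \<and> (\<forall>a\<in>AA. \<forall>y\<in>Y. a \<otimes> y \<in> Y)"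

definition "ssum Y K = {y \<oplus> k | y k. y \<in> Y \<and> k \<in> K}"

inductive_set span :: "'a set \<Rightarrow> 'a set \<Rightarrow> 'a set" for K S where
  span_zero: "\<zero> \<in> span K S"
| span_sm: "k \<in> K \<Longrightarrow> s \<in> S \<Longrightarrow> k \<otimes> s \<in> span K S"
| span_add: "x \<in> span K S \<Longrightarrow> y \<in> span K S \<Longrightarrow> x \<oplus> y \<in> span K S"

lemma AA_sub: "subring AA R" using AA_subring .

lemma AA_one: "\<one> \<in> AA" using subringE(3)[OF AA_subring] .
lemma AA_neg: "a \<in> AA \<Longrightarrow> \<ominus> a \<in> AA" using subringE(5)[OF AA_subring] .
lemma AA_mult: "a \<in> AA \<Longrightarrow> b \<in> AA \<Longrightarrow> a \<otimes> b \<in> AA" using subringE(6)[OF AA_subring] .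
lemma AA_add: "a \<in> AA \<Longrightarrow> b \<in> AA \<Longrightarrow> a \<oplus> b \<in> AA" using subringE(7)[OF AA_subring] .
lemma AA_c: "a \<in> AA \<Longrightarrow> a \<in> carrier R" using AA_carr by auto

lemma amodD: assumes "amod Y"
  shows "Y \<subseteq> carrier R" "\<zero> \<in> Y" "\<And>x y. x \<in> Y \<Longrightarrow> y \<in> Y \<Longrightarrow> x \<oplus> y \<in> Y"
    "\<And>a y. a \<in> AA \<Longrightarrow> y \<in> Y \<Longrightarrow> a \<otimes> y \<in> Y"
  using assms unfolding amod_def by auto

lemma amod_neg: assumes "amod Y" "y \<in> Y" shows "\<ominus> y \<in> Y"
proof -
  have yc: "y \<in> carrier R" using amodD(1)[OF assms(1)] assms(2) by auto
  have "(\<ominus> \<one>) \<otimes> y \<in> Y" using amodD(4)[OF assms(1) AA_neg[OF AA_one] assms(2)] .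
  moreover have "(\<ominus> \<one>) \<otimes> y = \<ominus> y" using yc by algebra
  ultimately show ?thesis by simp
qed

lemma amod_minus: assumes "amod Y" "x \<in> Y" "y \<in> Y" shows "x \<ominus> y \<in> Y"
  unfolding a_minus_def using amodD(3)[OF assms(1) assms(2) amod_neg[OF assms(1,3)]] .

lemma amod_inter: "amod Y \<Longrightarrow> amod K \<Longrightarrow> amod (Y \<inter> K)"
  unfolding amod_def by auto

lemma ssum_amod: assumes Y: "amod Y" and K: "amod K" shows "amod (ssum Y K)"
  unfolding amod_def
proof (intro conjI ballI)
  show "ssum Y K \<subseteq> carrier R" unfolding ssum_def using amodD(1)[OF Y] amodD(1)[OF K] by auto
  have "\<zero> \<oplus> \<zero> \<in> ssum Y K" unfolding ssum_def using amodD(2)[OF Y] amodD(2)[OF K] by blast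
  then show "\<zero> \<in> ssum Y K" by simp
  fix x y assume x: "x \<in> ssum Y K" and y: "y \<in> ssum Y K"
  then obtain y1 k1 y2 k2 where e: "x = y1 \<oplus> k1" "y = y2 \<oplus> k2" "y1 \<in> Y" "k1 \<in> K" "y2 \<in> Y" "k2 \<in> K"
    unfolding ssum_def by auto
  have c: "y1 \<in> carrier R" "y2 \<in> carrier R" "k1 \<in> carrier R" "k2 \<in> carrier R"
    using e amodD(1)[OF Y] amodD(1)[OF K] by auto
  have "x \<oplus> y = (y1 \<oplus> y2) \<oplus> (k1 \<oplus> k2)" using e c by algebra
  moreover have "y1 \<oplus> y2 \<in> Y" "k1 \<oplus> k2 \<in> K" using e amodD(3)[OF Y] amodD(3)[OF K] by auto
  ultimately show "x \<oplus> y \<in> ssum Y K" unfolding ssum_def by blast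
next
  fix a x assume a: "a \<in> AA" and x: "x \<in> ssum Y K"
  then obtain y1 k1 where e: "x = y1 \<oplus> k1" "y1 \<in> Y" "k1 \<in> K"
    unfolding ssum_def by auto
  have c: "y1 \<in> carrier R" "k1 \<in> carrier R" "a \<in> carrier R"
    using e amodD(1)[OF Y] amodD(1)[OF K] AA_c[OF a] by auto
  have "a \<otimes> x = a \<otimes> y1 \<oplus> a \<otimes> k1" using e c by algebra
  moreover have "a \<otimes> y1 \<in> Y" "a \<otimes> k1 \<in> K" using e a amodD(4)[OF Y] amodD(4)[OF K] by auto
  ultimately show "a \<otimes> x \<in> ssum Y K" unfolding ssum_def by blast
qed

lemma ssum_left: assumes "amod K" "Y \<subseteq> carrier R" shows "Y \<subseteq> ssum Y K"
proof
  fix y assume y: "y \<in> Y"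
  then have "y \<oplus> \<zero> \<in> ssum Y K" unfolding ssum_def using amodD(2)[OF assms(1)] by blast
  then show "y \<in> ssum Y K" using y assms(2) by auto
qed

lemma ssum_right: assumes "amod Y" "K \<subseteq> carrier R" shows "K \<subseteq> ssum Y K"
proof
  fix y assume y: "y \<in> K"
  then have "\<zero> \<oplus> y \<in> ssum Y K" unfolding ssum_def using amodD(2)[OF assms(1)] by blast
  then show "y \<in> ssum Y K" using y assms(2) by auto
qed

lemma ssum_mono: "Y \<subseteq> Y' \<Longrightarrow> K \<subseteq> K' \<Longrightarrow> ssum Y K \<subseteq> ssum Y' K'"
  unfolding ssum_def by blast

lemma ssum_sub: assumes "amod X" "Y \<subseteq> X" "K \<subseteq> X" shows "ssum Y K \<subseteq> X"
  unfolding ssum_def using amodD(3)[OF assms(1)] assms by blast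

lemma span_carr: assumes "K \<subseteq> carrier R" "S \<subseteq> carrier R" shows "span K S \<subseteq> carrier R"
proof
  fix x assume "x \<in> span K S" then show "x \<in> carrier R"
    by (induction rule: span.induct) (use assms in auto)
qed

lemma span_amod: assumes K: "K \<subseteq> carrier R" "\<And>a k. a \<in> AA \<Longrightarrow> k \<in> K \<Longrightarrow> a \<otimes> k \<in> K"
  and S: "S \<subseteq> carrier R" shows "amod (span K S)"
  unfolding amod_def
proof (intro conjI ballI)
  show "span K S \<subseteq> carrier R" using span_carr[OF K(1) S] .
  show "\<zero> \<in> span K S" by (rule span_zero)
  show "\<And>x y. x \<in> span K S \<Longrightarrow> y \<in> span K S \<Longrightarrow> x \<oplus> y \<in> span K S" by (rule span_add)
  fix a y assume a: "a \<in> AA" and y: "y \<in> span K S"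
  from y show "a \<otimes> y \<in> span K S"
  proof (induction rule: span.induct)
    case span_zero
    then show ?case using AA_c[OF a] by (simp add: span.span_zero)
  next
    case (span_sm k s)
    have kc: "k \<in> carrier R" "s \<in> carrier R" using span_sm K(1) S by auto
    then have "a \<otimes> (k \<otimes> s) = (a \<otimes> k) \<otimes> s" using AA_c[OF a] by (simp add: m_assoc)
    then show ?case using span.span_sm[OF K(2)[OF a span_sm(1)] span_sm(2)] by simp
  next
    case (span_add x y)
    have "x \<in> carrier R" "y \<in> carrier R" using span_add(1,2) span_carr[OF K(1) S] by auto
    then have "a \<otimes> (x \<oplus> y) = a \<otimes> x \<oplus> a \<otimes> y" using AA_c[OF a] by (simp add: r_distr)
    then show ?case using span.span_add[OF span_add(3,4)] by simp
  qed
qed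

lemma span_mono: "S \<subseteq> S' \<Longrightarrow> span K S \<subseteq> span K S'"
proof
  fix x assume "S \<subseteq> S'" "x \<in> span K S" then show "x \<in> span K S'"
    by (induction rule: span.induct[OF \<open>x \<in> span K S\<close>]) (auto intro: span.intros)
qed

lemma span_insert: assumes x: "x \<in> carrier R" and F: "F \<subseteq> carrier R"
  and z: "z \<in> span AA (insert x F)"
  shows "\<exists>s\<in>span AA F. \<exists>a\<in>AA. z = s \<oplus> a \<otimes> x"
  using z
proof (induction rule: span.induct)
  case span_zero
  have "\<zero> = \<zero> \<oplus> \<zero> \<otimes> x" using x by simp
  moreover have "\<zero> \<in> AA" using subringE(2)[OF AA_subring] .
  ultimately show ?case using span.span_zero by blast
next
  case (span_sm k s)
  show ?case
  proof (cases "s = x")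
    case True
    have "k \<otimes> s = \<zero> \<oplus> k \<otimes> x" using True x AA_c[OF span_sm(1)] by simp
    then show ?thesis using span.span_zero span_sm(1) by blast
  next
    case False
    then have "s \<in> F" using span_sm by auto
    then have "k \<otimes> s \<in> span AA F" using span.span_sm span_sm(1) by blast
    moreover have "k \<otimes> s = k \<otimes> s \<oplus> \<zero> \<otimes> x" using x AA_c[OF span_sm(1)] \<open>s \<in> F\<close> F by auto
    moreover have "\<zero> \<in> AA" using subringE(2)[OF AA_subring] .
    ultimately show ?thesis by blast
  qed
next
  case (span_add y1 y2)
  then obtain s1 a1 s2 a2 where e: "s1 \<in> span AA F" "a1 \<in> AA" "y1 = s1 \<oplus> a1 \<otimes> x"
     "s2 \<in> span AA F" "a2 \<in> AA" "y2 = s2 \<oplus> a2 \<otimes> x" by auto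
  have c: "s1 \<in> carrier R" "s2 \<in> carrier R" using e span_carr[OF AA_carr F] by auto
  have "y1 \<oplus> y2 = (s1 \<oplus> s2) \<oplus> (a1 \<oplus> a2) \<otimes> x" using e c x AA_c[OF e(2)] AA_c[OF e(5)] by algebra
  then show ?case using span.span_add[OF e(1) e(4)] AA_add[OF e(2) e(5)] by blast
qed


lemma chain_image: assumes ch: "chainS C" and mono: "\<And>X Y. X \<subseteq> Y \<Longrightarrow> f X \<subseteq> f Y"
  shows "chainS (f ` C)"
  unfolding chainS_def
proof (intro ballI)
  fix A B assume "A \<in> f ` C" "B \<in> f ` C"
  then obtain X Y where XY: "X \<in> C" "Y \<in> C" "A = f X" "B = f Y" by blast
  have "X \<subseteq> Y \<or> Y \<subseteq> X" using ch XY(1,2) unfolding chainS_def by blast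
  then show "A \<subseteq> B \<or> B \<subseteq> A" using mono XY(3,4) by blast
qed

lemma chain_two: assumes ch: "chainS D" and ne: "D \<noteq> {}" and sub: "D \<subseteq> {P, Q}"
  shows "\<Union>D \<in> D"
proof (cases "P \<in> D")
  case True
  show ?thesis
  proof (cases "Q \<in> D")
    case True
    then have DPQ: "D = {P, Q}" using \<open>P \<in> D\<close> sub by blast
    have "P \<subseteq> Q \<or> Q \<subseteq> P" using ch \<open>P \<in> D\<close> \<open>Q \<in> D\<close> unfolding chainS_def by blast
    then show ?thesis
    proof
      assume "P \<subseteq> Q" then have "\<Union>D = Q" using DPQ by blast
      then show ?thesis using \<open>Q \<in> D\<close> by simp
    next
      assume "Q \<subseteq> P" then have "\<Union>D = P" using DPQ by blast
      then show ?thesis using \<open>P \<in> D\<close> by simp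
    qed
  next
    case False
    then have "D = {P}" using \<open>P \<in> D\<close> sub by blast
    then show ?thesis by simp
  qed
next
  case False
  then have "D = {Q}" using ne sub by blast
  then show ?thesis by simp
qed

lemma two_valued:
  assumes X': "amod X'" and Z: "amod Z" and X'Z: "X' \<subseteq> Z" and ZX: "Z \<subseteq> X"
    and x: "x \<in> carrier R"
    and rep: "\<And>z. z \<in> X \<Longrightarrow> \<exists>x'\<in>X'. \<exists>a\<in>AA. z = x' \<oplus> a \<otimes> x"
    and ix: "\<And>i. i \<in> II \<Longrightarrow> i \<otimes> x \<in> X'"
  shows "Z = X' \<or> Z \<supseteq> X"
proof (cases "Z \<subseteq> X'")
  case True
  then show ?thesis using X'Z by auto
next
  case False
  then obtain z where z: "z \<in> Z" "z \<notin> X'" by auto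
  then obtain x' a where xa: "x' \<in> X'" "a \<in> AA" "z = x' \<oplus> a \<otimes> x" using rep ZX by blast
  have x'c: "x' \<in> carrier R" using xa amodD(1)[OF X'] by auto
  have ac: "a \<in> carrier R" using AA_c[OF xa(2)] .
  have "a \<notin> II"
  proof
    assume "a \<in> II"
    then have "a \<otimes> x \<in> X'" using ix by auto
    then have "z \<in> X'" using xa amodD(3)[OF X'] by auto
    then show False using z by auto
  qed
  then obtain b where b: "b \<in> AA" "a \<otimes> b \<ominus> \<one> \<in> II" using field_AA[OF xa(2)] by auto
  have bc: "b \<in> carrier R" using AA_c[OF b(1)] .
  have xeq: "x = b \<otimes> z \<ominus> b \<otimes> x' \<ominus> (a \<otimes> b \<ominus> \<one>) \<otimes> x"
    unfolding xa(3) using x x'c ac bc by algebra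
  have "b \<otimes> z \<in> Z" using amodD(4)[OF Z b(1) z(1)] .
  moreover have "b \<otimes> x' \<in> Z" using amodD(4)[OF X' b(1) xa(1)] X'Z by auto
  moreover have "(a \<otimes> b \<ominus> \<one>) \<otimes> x \<in> Z" using ix[OF b(2)] X'Z by auto
  ultimately have xZ: "x \<in> Z" using xeq amod_minus[OF Z] by metis
  have "X \<subseteq> Z"
  proof
    fix w assume "w \<in> X"
    then obtain w' c where "w' \<in> X'" "c \<in> AA" "w = w' \<oplus> c \<otimes> x" using rep by blast
    then show "w \<in> Z" using amodD(3)[OF Z] amodD(4)[OF Z] xZ X'Z by auto
  qed
  then show ?thesis by auto
qed

lemma modular_chain:
  assumes ne: "C \<noteq> {}" and ch: "chainS C" and am: "\<And>Y. Y \<in> C \<Longrightarrow> amod Y" and K: "amod K"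
    and h1: "\<Union>((\<lambda>Y. Y \<inter> K) ` C) \<in> (\<lambda>Y. Y \<inter> K) ` C"
    and h2: "\<Union>((\<lambda>Y. ssum Y K) ` C) \<in> (\<lambda>Y. ssum Y K) ` C"
  shows "\<Union>C \<in> C"
proof -
  obtain Y0 where Y0: "Y0 \<in> C" "Y0 \<inter> K = \<Union>((\<lambda>Y. Y \<inter> K) ` C)" using h1 by auto
  obtain Y1 where Y1: "Y1 \<in> C" "ssum Y1 K = \<Union>((\<lambda>Y. ssum Y K) ` C)" using h2 by auto
  define Y2 where "Y2 = (if Y0 \<subseteq> Y1 then Y1 else Y0)"
  have "Y0 \<subseteq> Y1 \<or> Y1 \<subseteq> Y0" using ch Y0(1) Y1(1) unfolding chainS_def by blast
  then have Y2: "Y2 \<in> C" "Y0 \<subseteq> Y2" "Y1 \<subseteq> Y2"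
    unfolding Y2_def using Y0(1) Y1(1) by auto
  have all: "Y \<subseteq> Y2" if Y: "Y \<in> C" for Y
  proof (cases "Y \<subseteq> Y2")
    case True then show ?thesis .
  next
    case False
    then have sub: "Y2 \<subseteq> Y" using ch Y Y2(1) unfolding chainS_def by blast
    show ?thesis
    proof
      fix y assume y: "y \<in> Y"
      have yc: "y \<in> carrier R" using y amodD(1)[OF am[OF Y]] by auto
      have "y \<in> ssum Y K" using ssum_left[OF K amodD(1)[OF am[OF Y]]] y by auto
      also have "\<dots> \<subseteq> ssum Y1 K" using Y1(2) Y by auto
      also have "\<dots> \<subseteq> ssum Y2 K" using ssum_mono[OF Y2(3)] by auto
      finally obtain y2 k where yk: "y = y2 \<oplus> k" "y2 \<in> Y2" "k \<in> K" unfolding ssum_def by auto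
      have c: "y2 \<in> carrier R" "k \<in> carrier R" using yk amodD(1)[OF am[OF Y2(1)]] amodD(1)[OF K] by auto
      have "k = y \<ominus> y2" using yk(1) c by algebra
      then have "k \<in> Y" using amod_minus[OF am[OF Y] y] sub yk(2) by auto
      then have "k \<in> Y0 \<inter> K" using Y0(2) Y yk(3) by auto
      then have "k \<in> Y2" using Y2(2) by auto
      then show "y \<in> Y2" using yk amodD(3)[OF am[OF Y2(1)]] by auto
    qed
  qed
  then have "\<Union>C = Y2" using Y2(1) by auto
  then show ?thesis using Y2(1) by simp
qed

lemma finite_length:
  assumes F: "finite F" "F \<subseteq> carrier R" and W: "amod W"
    and hyp: "\<And>i z. i \<in> II \<Longrightarrow> z \<in> ssum W (span AA F) \<Longrightarrow> i \<otimes> z \<in> W"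
  shows "\<And>C. C \<noteq> {} \<Longrightarrow> chainS C \<Longrightarrow> (\<And>Y. Y \<in> C \<Longrightarrow> amod Y \<and> W \<subseteq> Y \<and> Y \<subseteq> ssum W (span AA F))
     \<Longrightarrow> \<Union>C \<in> C"
  using F hyp
proof (induction F rule: finite_induct)
  case empty
  have "span AA {} \<subseteq> {\<zero>}"
  proof
    fix x assume "x \<in> span AA {}" then show "x \<in> {\<zero>}"
      by (induction rule: span.induct) auto
  qed
  then have "ssum W (span AA {}) \<subseteq> W" using ssum_sub[OF W] amodD(2)[OF W] by auto
  then have "\<And>Y. Y \<in> C \<Longrightarrow> Y = W" using empty.prems(3) by blast
  then have "C = {W}" using empty.prems(1) by blast
  then show ?case by simp
next
  case (insert x F)
  have xc: "x \<in> carrier R" and Fc: "F \<subseteq> carrier R" using insert.prems(4) by auto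
  have amS: "amod (span AA G)" if "G \<subseteq> carrier R" for G
    using span_amod[OF AA_carr AA_mult that] .
  define X' where "X' = ssum W (span AA F)"
  define X where "X = ssum W (span AA (insert x F))"
  have X'am: "amod X'" unfolding X'_def using ssum_amod[OF W amS[OF Fc]] .
  have Xam: "amod X" unfolding X_def using ssum_amod[OF W amS] insert.prems(4) by auto
  have X'X: "X' \<subseteq> X" unfolding X'_def X_def by (rule ssum_mono[OF subset_refl span_mono]) auto
  have WX': "W \<subseteq> X'" unfolding X'_def using ssum_left[OF amS[OF Fc] amodD(1)[OF W]] .
  have xX: "x \<in> X"
  proof -
    have "\<one> \<otimes> x \<in> span AA (insert x F)" using span_sm[OF AA_one] by auto
    then have "x \<in> span AA (insert x F)" using xc by simp
    then show ?thesis unfolding X_def using ssum_right[OF W] span_carr[OF AA_carr] insert.prems(4) by blast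
  qed
  have ix: "\<And>i. i \<in> II \<Longrightarrow> i \<otimes> x \<in> X'" using insert.prems(5) xX WX' unfolding X_def by auto
  have rep: "\<exists>x'\<in>X'. \<exists>a\<in>AA. z = x' \<oplus> a \<otimes> x" if z: "z \<in> X" for z
  proof -
    obtain w s where ws: "z = w \<oplus> s" "w \<in> W" "s \<in> span AA (insert x F)" using z unfolding X_def ssum_def by auto
    obtain s' a where sa: "s' \<in> span AA F" "a \<in> AA" "s = s' \<oplus> a \<otimes> x" using span_insert[OF xc Fc ws(3)] by auto
    have c: "w \<in> carrier R" "s' \<in> carrier R" "a \<in> carrier R"
      using ws sa amodD(1)[OF W] span_carr[OF AA_carr Fc] AA_c by auto
    have "z = (w \<oplus> s') \<oplus> a \<otimes> x" using ws sa c xc by algebra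
    moreover have "w \<oplus> s' \<in> X'" unfolding X'_def ssum_def using ws sa by blast
    ultimately show ?thesis using sa by blast
  qed
  have h1: "\<Union>((\<lambda>Y. Y \<inter> X') ` C) \<in> (\<lambda>Y. Y \<inter> X') ` C"
  proof (rule insert.IH)
    show "(\<lambda>Y. Y \<inter> X') ` C \<noteq> {}" using insert.prems(1) by auto
    show "chainS ((\<lambda>Y. Y \<inter> X') ` C)" by (rule chain_image[OF insert.prems(2)]) auto
    show "F \<subseteq> carrier R" using Fc .
    fix Y assume "Y \<in> (\<lambda>Y. Y \<inter> X') ` C"
    then obtain Y' where Y': "Y' \<in> C" "Y = Y' \<inter> X'" by auto
    show "amod Y \<and> W \<subseteq> Y \<and> Y \<subseteq> ssum W (span AA F)"
      using insert.prems(3)[OF Y'(1)] Y'(2) amod_inter X'am WX' unfolding X'_def by auto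
  next
    fix i z assume "i \<in> II" "z \<in> ssum W (span AA F)"
    then show "i \<otimes> z \<in> W" using insert.prems(5) X'X unfolding X'_def X_def by auto
  qed
  have h2: "\<Union>((\<lambda>Y. ssum Y X') ` C) \<in> (\<lambda>Y. ssum Y X') ` C"
  proof (rule chain_two)
    show "chainS ((\<lambda>Y. ssum Y X') ` C)" by (rule chain_image[OF insert.prems(2)]) (rule ssum_mono, auto)
    show "(\<lambda>Y. ssum Y X') ` C \<noteq> {}" using insert.prems(1) by auto
    show "(\<lambda>Y. ssum Y X') ` C \<subseteq> {X', X}"
    proof
      fix Z assume "Z \<in> (\<lambda>Y. ssum Y X') ` C"
      then obtain Y where Y: "Y \<in> C" "Z = ssum Y X'" by auto
      have YX: "amod Y" "Y \<subseteq> X" using insert.prems(3)[OF Y(1)] unfolding X_def by auto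
      have Zam: "amod Z" using ssum_amod[OF YX(1) X'am] Y(2) by simp
      have "X' \<subseteq> Z" using ssum_right[OF YX(1) amodD(1)[OF X'am]] Y(2) by simp
      moreover have "Z \<subseteq> X" using ssum_sub[OF Xam YX(2) X'X] Y(2) by simp
      ultimately have "Z = X' \<or> X \<subseteq> Z" using two_valued[OF X'am Zam _ _ xc rep ix] by blast
      then show "Z \<in> {X', X}" using \<open>Z \<subseteq> X\<close> by auto
    qed
  qed
  show ?case
    by (rule modular_chain[OF insert.prems(1,2) _ X'am h1 h2]) (use insert.prems(3) in blast)
qed


lemma idl_fin: assumes S: "S \<subseteq> carrier R" and x: "x \<in> Idl S"
  shows "\<exists>G. finite G \<and> G \<subseteq> S \<and> x \<in> Idl G"
proof -
  define D where "D = {x. \<exists>G. finite G \<and> G \<subseteq> S \<and> x \<in> Idl G}"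
  have Gid: "ideal (Idl G) R" if "G \<subseteq> S" for G by (rule genideal_ideal) (use that S in auto)
  have Dc: "D \<subseteq> carrier R"
  proof
    fix x assume "x \<in> D"
    then obtain G where "G \<subseteq> S" "x \<in> Idl G" unfolding D_def by auto
    then show "x \<in> carrier R" using additive_subgroup.a_subset[OF ideal.axioms(1)[OF Gid]] by blast
  qed
  have "ideal D R"
  proof (rule idealI[OF ring_axioms])
    show "subgroup D (add_monoid R)"
    proof (rule add.subgroupI)
      show "D \<subseteq> carrier R" using Dc .
      have "\<zero> \<in> Idl {}" using additive_subgroup.zero_closed[OF ideal.axioms(1)[OF Gid[of "{}"]]] by simp
      then show "D \<noteq> {}" unfolding D_def by blast
    next
      fix a assume "a \<in> D"
      then obtain G where "finite G" "G \<subseteq> S" "a \<in> Idl G" unfolding D_def by auto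
      then show "\<ominus> a \<in> D" unfolding D_def
        using additive_subgroup.a_inv_closed[OF ideal.axioms(1)[OF Gid]] by blast
    next
      fix a b assume "a \<in> D" "b \<in> D"
      then obtain G1 G2 where G: "finite G1" "G1 \<subseteq> S" "a \<in> Idl G1" "finite G2" "G2 \<subseteq> S" "b \<in> Idl G2"
        unfolding D_def by auto
      have "Idl G1 \<subseteq> Idl (G1 \<union> G2)" "Idl G2 \<subseteq> Idl (G1 \<union> G2)"
        using subset_Idl_subset[of "G1 \<union> G2"] G S by auto
      then have ab: "a \<in> Idl (G1 \<union> G2)" "b \<in> Idl (G1 \<union> G2)" using G by auto
      have "a \<oplus> b \<in> Idl (G1 \<union> G2)"
        by (rule additive_subgroup.a_closed[OF ideal.axioms(1)[OF Gid[of "G1 \<union> G2"]] ab]) (use G in auto)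
      then show "a \<oplus> b \<in> D" unfolding D_def using G by blast
    qed
  next
    fix a x assume aD: "a \<in> D" and xc: "x \<in> carrier R"
    from aD have "\<exists>G. finite G \<and> G \<subseteq> S \<and> a \<in> Idl G" unfolding D_def by simp
    then obtain G where G: "finite G" "G \<subseteq> S" "a \<in> Idl G" by (elim exE conjE)
    have "x \<otimes> a \<in> Idl G" by (rule ideal.I_l_closed[OF Gid[OF G(2)] G(3) xc])
    then show "x \<otimes> a \<in> D" unfolding D_def using G(1,2) by blast
    have "a \<otimes> x \<in> Idl G" by (rule ideal.I_r_closed[OF Gid[OF G(2)] G(3) xc])
    then show "a \<otimes> x \<in> D" unfolding D_def using G(1,2) by blast
  qed
  moreover have "S \<subseteq> D"
  proof
    fix s assume "s \<in> S"
    then have "s \<in> Idl {s}" using genideal_self' S by auto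
    then show "s \<in> D" unfolding D_def using \<open>s \<in> S\<close> by blast
  qed
  ultimately have "Idl S \<subseteq> D" using genideal_minimal by blast
  then show ?thesis using x unfolding D_def by auto
qed

lemma amod_ideal: assumes X: "amod X" and cl: "\<And>r x. r \<in> carrier R \<Longrightarrow> x \<in> X \<Longrightarrow> r \<otimes> x \<in> X"
  shows "ideal X R"
proof (rule idealI[OF ring_axioms])
  show "subgroup X (add_monoid R)"
    by (rule add.subgroupI) (use amodD[OF X] amod_neg[OF X] in auto)
next
  fix a x assume "a \<in> X" "x \<in> carrier R"
  then show "x \<otimes> a \<in> X" using cl by auto
  then show "a \<otimes> x \<in> X" using amodD(1)[OF X] \<open>a \<in> X\<close> \<open>x \<in> carrier R\<close> m_comm by auto
qed

lemma II_amod: "amod II"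
  unfolding amod_def using II_carr II_ideal AA_c
  by (auto intro: ideal.I_l_closed additive_subgroup.zero_closed additive_subgroup.a_closed ideal.axioms(1))

lemma AA_amod: "amod AA"
  unfolding amod_def using AA_carr AA_add AA_mult subringE(2)[OF AA_subring] by auto

lemma e_exists: assumes N: "N \<in> Ms"
  shows "\<exists>e\<in>carrier R. \<one> \<ominus> e \<in> N \<and> (\<forall>N'\<in>Ms - {N}. e \<in> N')"
proof -
  have "\<forall>N'\<in>Ms - {N}. \<exists>p\<in>N. \<exists>c\<in>N'. \<one> = p \<oplus> c"
    using comax_step[OF Ms_ideal[OF N]] Ms_incomp N by blast
  then obtain p c where pc: "p \<in> N" "c \<in> carrier R" "\<forall>N'\<in>Ms - {N}. c \<in> N'" "\<one> = p \<oplus> c"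
    using comax_fin[OF Ms_ideal[OF N], of "Ms - {N}"] Ms_fin by auto
  have pcar: "p \<in> carrier R" using pc Ms_sub[OF N] by auto
  have "\<one> \<ominus> c = (p \<oplus> c) \<ominus> c" by (simp only: pc(4)[symmetric])
  also have "\<dots> = p" using pcar pc(2) by algebra
  finally have "\<one> \<ominus> c = p" .
  then have "\<one> \<ominus> c \<in> N" using pc(1) by simp
  then show ?thesis using pc(2,3) by blast
qed

definition "ee N = (SOME e. e \<in> carrier R \<and> \<one> \<ominus> e \<in> N \<and> (\<forall>N'\<in>Ms - {N}. e \<in> N'))"

lemma ee: assumes "N \<in> Ms"
  shows "ee N \<in> carrier R" "\<one> \<ominus> ee N \<in> N" "\<And>N'. N' \<in> Ms \<Longrightarrow> N' \<noteq> N \<Longrightarrow> ee N \<in> N'"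
proof -
  have "ee N \<in> carrier R \<and> \<one> \<ominus> ee N \<in> N \<and> (\<forall>N'\<in>Ms - {N}. ee N \<in> N')"
    unfolding ee_def by (rule someI_ex) (use e_exists[OF assms] in blast)
  then show "ee N \<in> carrier R" "\<one> \<ominus> ee N \<in> N" "\<And>N'. N' \<in> Ms \<Longrightarrow> N' \<noteq> N \<Longrightarrow> ee N \<in> N'" by auto
qed

lemma rfact: assumes r: "r \<in> carrier R" and N: "N \<in> Ms"
  shows "\<exists>b\<in>AA. r \<otimes> ee N \<ominus> b \<otimes> ee N \<in> II"
proof -
  obtain b where b: "b \<in> AA" "b \<ominus> r \<in> N" using surj_AA[OF r N] by auto
  have bc: "b \<in> carrier R" using AA_c[OF b(1)] .
  have ec: "ee N \<in> carrier R" using ee(1)[OF N] .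
  have eq0: "r \<otimes> ee N \<ominus> b \<otimes> ee N = (r \<ominus> b) \<otimes> ee N" using r bc ec by algebra
  have eq1: "r \<ominus> b = \<ominus> (b \<ominus> r)" using r bc by algebra
  have eq: "r \<otimes> ee N \<ominus> b \<otimes> ee N = (\<ominus> (b \<ominus> r)) \<otimes> ee N"
    using eq0 eq1 by simp
  have "r \<otimes> ee N \<ominus> b \<otimes> ee N \<in> N'" if N': "N' \<in> Ms" for N'
  proof (cases "N' = N")
    case True
    have "\<ominus> (b \<ominus> r) \<in> N" by (rule Ms_neg[OF N b(2)])
    then show ?thesis unfolding eq using True ideal.I_r_closed[OF Ms_ideal[OF N] _ ec] by auto
  next
    case False
    have "\<ominus> (b \<ominus> r) \<in> carrier R" using bc r by auto
    then show ?thesis unfolding eq using ideal.I_l_closed[OF Ms_ideal[OF N'] ee(3)[OF N N' False]] by auto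
  qed
  then show ?thesis using b(1) unfolding II_def by blast
qed

lemma decomp: assumes S: "finite S" "S \<subseteq> Ms"
  shows "\<And>r. r \<in> carrier R \<Longrightarrow> \<exists>s\<in>span AA (ee ` Ms). \<forall>N\<in>S. r \<ominus> s \<in> N"
  using S
proof (induction S rule: finite_induct)
  case empty
  then show ?case using span_zero by blast
next
  case (insert N S)
  have NM: "N \<in> Ms" using insert by auto
  obtain s where s: "s \<in> span AA (ee ` Ms)" "\<forall>N'\<in>S. r \<ominus> s \<in> N'" using insert.IH[OF insert.prems(1)] insert.prems(2) by blast
  have Ec: "ee ` Ms \<subseteq> carrier R" using ee(1) by auto
  have sc: "s \<in> carrier R" using s(1) span_carr[OF AA_carr Ec] by auto
  have rs: "r \<ominus> s \<in> carrier R" using sc insert.prems by auto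
  obtain c where c: "c \<in> AA" "c \<ominus> (r \<ominus> s) \<in> N" using surj_AA[OF rs NM] by auto
  have cc: "c \<in> carrier R" using AA_c[OF c(1)] .
  have ec: "ee N \<in> carrier R" using ee(1)[OF NM] .
  define s' where "s' = s \<oplus> c \<otimes> ee N"
  have s'span: "s' \<in> span AA (ee ` Ms)" unfolding s'_def using span_add[OF s(1) span_sm[OF c(1)]] NM by blast
  have "r \<ominus> s' \<in> N'" if N': "N' \<in> insert N S" for N'
  proof (cases "N' = N")
    case True
    have eq: "r \<ominus> s' = \<ominus> (c \<ominus> (r \<ominus> s)) \<oplus> c \<otimes> (\<one> \<ominus> ee N)"
      unfolding s'_def using insert.prems sc cc ec by algebra
    have "\<ominus> (c \<ominus> (r \<ominus> s)) \<in> N" by (rule Ms_neg[OF NM c(2)])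
    moreover have "c \<otimes> (\<one> \<ominus> ee N) \<in> N" using ideal.I_l_closed[OF Ms_ideal[OF NM] ee(2)[OF NM] cc] .
    ultimately show ?thesis unfolding eq True by (rule Ms_add[OF NM])
  next
    case False
    then have N'S: "N' \<in> S" "N' \<in> Ms" using N' insert by auto
    have eq: "r \<ominus> s' = (r \<ominus> s) \<oplus> (\<ominus> c) \<otimes> ee N"
      unfolding s'_def using insert.prems sc cc ec by algebra
    have "(\<ominus> c) \<otimes> ee N \<in> N'" using ideal.I_l_closed[OF Ms_ideal[OF N'S(2)] ee(3)[OF NM N'S(2) False]] cc by auto
    moreover have "r \<ominus> s \<in> N'" using s(2) N'S(1) by blast
    ultimately show ?thesis unfolding eq using Ms_add[OF N'S(2)] by blast
  qed
  then show ?case using s'span by blast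
qed

lemma sub_ideal: assumes "ideal J (R\<lparr>carrier := AA\<rparr>)" shows "J \<subseteq> AA" "amod J"
proof -
  interpret J: ideal J "R\<lparr>carrier := AA\<rparr>" by fact
  show "J \<subseteq> AA" using J.a_subset by simp
  moreover have "\<zero> \<in> J" using additive_subgroup.zero_closed[OF J.is_additive_subgroup] by simp
  moreover have "\<And>x y. x \<in> J \<Longrightarrow> y \<in> J \<Longrightarrow> x \<oplus> y \<in> J"
    using additive_subgroup.a_closed[OF J.is_additive_subgroup] by simp
  ultimately show "amod J" unfolding amod_def using AA_carr J.I_l_closed by auto
qed


lemma W_mult: assumes G: "G \<subseteq> carrier R" and r: "r \<in> carrier R" and w: "w \<in> span II G"
  shows "r \<otimes> w \<in> span II G"
  using w
proof (induction rule: span.induct)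
  case span_zero then show ?case using r span.span_zero by simp
next
  case (span_sm k s)
  have c: "k \<in> carrier R" "s \<in> carrier R" using span_sm G II_carr by auto
  have "r \<otimes> (k \<otimes> s) = (r \<otimes> k) \<otimes> s" using c r by (simp add: m_assoc)
  moreover have "r \<otimes> k \<in> II" using ideal.I_l_closed[OF II_ideal span_sm(1) r] .
  ultimately show ?case using span.span_sm span_sm(2) by metis
next
  case (span_add x y)
  have c: "x \<in> carrier R" "y \<in> carrier R" using span_add(1,2) span_carr[OF II_carr G] by auto
  have "r \<otimes> (x \<oplus> y) = r \<otimes> x \<oplus> r \<otimes> y" using c r by (simp add: r_distr)
  then show ?case using span.span_add[OF span_add(3,4)] by simp
qed

lemma noeth_AA: "noetherian_ring (R\<lparr>carrier := AA\<rparr>)"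
proof (rule ring.trivial_ideal_chain_imp_noetherian[OF subring_is_ring[OF AA_subring]])
  fix C assume Cne: "C \<noteq> {}" and Cch: "subset.chain {I. ideal I (R\<lparr>carrier := AA\<rparr>)} C"
  have Jid: "\<And>J. J \<in> C \<Longrightarrow> J \<subseteq> AA \<and> amod J"
    using Cch sub_ideal unfolding subset_chain_iff by blast
  have ch: "chainS C" using Cch unfolding subset_chain_iff by blast
  define E where "E = (\<lambda>J. Idl (J \<inter> II)) ` C"
  have Echain: "subset.chain {I. ideal I R} E"
    unfolding subset_chain_iff
  proof
    have "ideal (Idl (J \<inter> II)) R" for J by (rule genideal_ideal) (use II_carr in auto)
    then show "E \<subseteq> {I. ideal I R}" unfolding E_def by auto
    show "chainS E" unfolding E_def
      by (rule chain_image[OF ch]) (rule subset_Idl_subset, use II_carr in auto)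
  qed
  have "\<Union>E \<in> E" by (rule ideal_chain_is_trivial) (use Cne E_def Echain in auto)
  then obtain J0 where J0: "J0 \<in> C" "Idl (J0 \<inter> II) = \<Union>E" unfolding E_def by auto
  have J0c: "J0 \<inter> II \<subseteq> carrier R" using II_carr by auto
  obtain F0 where F0: "F0 \<subseteq> carrier R" "finite F0" "Idl (J0 \<inter> II) = Idl F0"
    using finetely_gen[OF genideal_ideal[OF J0c]] by blast
  have "\<forall>f\<in>F0. \<exists>G. finite G \<and> G \<subseteq> J0 \<inter> II \<and> f \<in> Idl G"
  proof
    fix f assume "f \<in> F0"
    then have "f \<in> Idl (J0 \<inter> II)" using F0 genideal_self by auto
    then show "\<exists>G. finite G \<and> G \<subseteq> J0 \<inter> II \<and> f \<in> Idl G" using idl_fin[OF J0c] by blast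
  qed
  then obtain Gf where Gf: "\<And>f. f \<in> F0 \<Longrightarrow> finite (Gf f) \<and> Gf f \<subseteq> J0 \<inter> II \<and> f \<in> Idl (Gf f)" by metis
  define G where "G = \<Union>(Gf ` F0)"
  have Gfin: "finite G" unfolding G_def using F0(2) Gf by auto
  have GJ: "G \<subseteq> J0 \<inter> II" unfolding G_def using Gf by auto
  have Gc: "G \<subseteq> carrier R" using GJ II_carr by auto
  have IdlG: "Idl (J0 \<inter> II) \<subseteq> Idl G"
  proof -
    have "F0 \<subseteq> Idl G"
    proof
      fix f assume f: "f \<in> F0"
      have "Gf f \<subseteq> G" unfolding G_def using f by auto
      then have "Idl (Gf f) \<subseteq> Idl G" using subset_Idl_subset[OF Gc] by auto
      then show "f \<in> Idl G" using Gf[OF f] by auto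
    qed
    then have "Idl F0 \<subseteq> Idl G" using genideal_minimal[OF genideal_ideal[OF Gc]] by auto
    then show ?thesis using F0(3) by simp
  qed
  define xs where "xs = (\<lambda>(N, g). ee N \<otimes> g) ` (Ms \<times> G)"
  have xsfin: "finite xs" unfolding xs_def using Ms_fin Gfin by auto
  have xsc: "xs \<subseteq> carrier R" unfolding xs_def using ee(1) Gc by auto
  define W where "W = span II G"
  define X where "X = ssum W (span AA xs)"
  have Wam: "amod W" unfolding W_def
    using span_amod[OF II_carr _ Gc] ideal.I_l_closed[OF II_ideal] AA_c by blast
  have Wc: "W \<subseteq> carrier R" using amodD(1)[OF Wam] .
  have Sam: "amod (span AA xs)" using span_amod[OF AA_carr AA_mult xsc] .
  have Xam: "amod X" unfolding X_def using ssum_amod[OF Wam Sam] .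
  have WX: "W \<subseteq> X" unfolding X_def using ssum_left[OF Sam Wc] .
  have SX: "span AA xs \<subseteq> X" unfolding X_def using ssum_right[OF Wam amodD(1)[OF Sam]] .
  have Wmult: "\<And>r w. r \<in> carrier R \<Longrightarrow> w \<in> W \<Longrightarrow> r \<otimes> w \<in> W"
    unfolding W_def using W_mult[OF Gc] by blast
  have Smult: "r \<otimes> z \<in> X" if r: "r \<in> carrier R" and z: "z \<in> span AA xs" for r z
    using z
  proof (induction rule: span.induct)
    case span_zero then show ?case using r amodD(2)[OF Xam] by simp
  next
    case (span_sm k s)
    obtain N g where Ng: "N \<in> Ms" "g \<in> G" "s = ee N \<otimes> g" using span_sm(2) unfolding xs_def by auto
    have kc: "k \<in> carrier R" using AA_c[OF span_sm(1)] .
    have ec: "ee N \<in> carrier R" using ee(1)[OF Ng(1)] .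
    have gc: "g \<in> carrier R" using Ng(2) Gc by auto
    obtain b where b: "b \<in> AA" "(r \<otimes> k) \<otimes> ee N \<ominus> b \<otimes> ee N \<in> II"
      using rfact[of "r \<otimes> k" N] r kc Ng(1) by auto
    define i where "i = (r \<otimes> k) \<otimes> ee N \<ominus> b \<otimes> ee N"
    have bc: "b \<in> carrier R" using AA_c[OF b(1)] .
    have eq: "r \<otimes> (k \<otimes> s) = i \<otimes> g \<oplus> b \<otimes> s" unfolding i_def Ng(3)
      using r kc ec gc bc by algebra
    have "i \<otimes> g \<in> W" unfolding W_def i_def using span.span_sm[OF b(2) Ng(2)] .
    moreover have "b \<otimes> s \<in> span AA xs" using span.span_sm[OF b(1) span_sm(2)] .
    ultimately show ?case unfolding eq X_def ssum_def by blast
  next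
    case (span_add x y)
    have c: "x \<in> carrier R" "y \<in> carrier R" using span_add(1,2) amodD(1)[OF Sam] by auto
    have "r \<otimes> (x \<oplus> y) = r \<otimes> x \<oplus> r \<otimes> y" using c r by (simp add: r_distr)
    then show ?case using amodD(3)[OF Xam span_add(3,4)] by simp
  qed
  have Xmult: "r \<otimes> x \<in> X" if r: "r \<in> carrier R" and x: "x \<in> X" for r x
  proof -
    obtain w z where wz: "x = w \<oplus> z" "w \<in> W" "z \<in> span AA xs" using x unfolding X_def ssum_def by auto
    have c: "w \<in> carrier R" "z \<in> carrier R" using wz Wc amodD(1)[OF Sam] by auto
    have "r \<otimes> x = r \<otimes> w \<oplus> r \<otimes> z" unfolding wz(1) using c r by (simp add: r_distr)
    moreover have "r \<otimes> w \<in> X" using Wmult[OF r wz(2)] WX by auto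
    moreover have "r \<otimes> z \<in> X" using Smult[OF r wz(3)] .
    ultimately show ?thesis using amodD(3)[OF Xam] by simp
  qed
  have Xid: "ideal X R" using amod_ideal[OF Xam Xmult] .
  have Sspan: "s \<otimes> g \<in> span AA xs" if s: "s \<in> span AA (ee ` Ms)" and g: "g \<in> G" for s g
    using s
  proof (induction rule: span.induct)
    case span_zero then show ?case using g Gc span.span_zero by auto
  next
    case (span_sm k e)
    obtain N where N: "N \<in> Ms" "e = ee N" using span_sm(2) by auto
    have c: "k \<in> carrier R" "e \<in> carrier R" "g \<in> carrier R" using AA_c[OF span_sm(1)] ee(1)[OF N(1)] N g Gc by auto
    have "(k \<otimes> e) \<otimes> g = k \<otimes> (e \<otimes> g)" using c by (simp add: m_assoc)
    moreover have "e \<otimes> g \<in> xs" unfolding xs_def using N g by auto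
    ultimately show ?case using span.span_sm[OF span_sm(1)] by metis
  next
    case (span_add x y)
    have c: "x \<in> carrier R" "y \<in> carrier R" using span_add(1,2) span_carr[OF AA_carr] ee(1) by blast+
    have gc: "g \<in> carrier R" using g Gc by auto
    have "(x \<oplus> y) \<otimes> g = x \<otimes> g \<oplus> y \<otimes> g" using c gc by (simp add: l_distr)
    then show ?case using span.span_add[OF span_add(3,4)] by simp
  qed
  have GX: "G \<subseteq> X"
  proof
    fix g assume g: "g \<in> G"
    obtain s where s: "s \<in> span AA (ee ` Ms)" "\<forall>N\<in>Ms. \<one> \<ominus> s \<in> N"
      using decomp[OF Ms_fin subset_refl one_closed] by blast
    have sc: "s \<in> carrier R" using s(1) span_carr[OF AA_carr] ee(1) by blast
    have gc: "g \<in> carrier R" using g Gc by auto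
    have "\<one> \<ominus> s \<in> II" using s(2) unfolding II_def by blast
    then have "(\<one> \<ominus> s) \<otimes> g \<in> W" unfolding W_def using span.span_sm g by blast
    moreover have "s \<otimes> g \<in> span AA xs" using Sspan[OF s(1) g] .
    moreover have "g = (\<one> \<ominus> s) \<otimes> g \<oplus> s \<otimes> g" using sc gc by algebra
    ultimately show "g \<in> X" unfolding X_def ssum_def by blast
  qed
  have IdlX: "Idl G \<subseteq> X" using genideal_minimal[OF Xid GX] .
  have hyp: "i \<otimes> z \<in> W" if i: "i \<in> II" and z: "z \<in> X" for i z
  proof -
    have ic: "i \<in> carrier R" using i II_carr by auto
    have Sh: "i \<otimes> t \<in> W" if t: "t \<in> span AA xs" for t
      using t
    proof (induction rule: span.induct)
      case span_zero then show ?case using ic amodD(2)[OF Wam] by simp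
    next
      case (span_sm k s)
      obtain N g where Ng: "N \<in> Ms" "g \<in> G" "s = ee N \<otimes> g" using span_sm(2) unfolding xs_def by auto
      have c: "k \<in> carrier R" "ee N \<in> carrier R" "g \<in> carrier R" using AA_c[OF span_sm(1)] ee(1)[OF Ng(1)] Ng(2) Gc by auto
      have "i \<otimes> (k \<otimes> s) = ((i \<otimes> k) \<otimes> ee N) \<otimes> g" unfolding Ng(3) using c ic by (simp add: m_assoc)
      moreover have "(i \<otimes> k) \<otimes> ee N \<in> II"
        using ideal.I_r_closed[OF II_ideal ideal.I_r_closed[OF II_ideal i c(1)] c(2)] .
      ultimately show ?case unfolding W_def using span.span_sm[OF _ Ng(2)] by metis
    next
      case (span_add x y)
      have c: "x \<in> carrier R" "y \<in> carrier R" using span_add(1,2) amodD(1)[OF Sam] by auto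
      have "i \<otimes> (x \<oplus> y) = i \<otimes> x \<oplus> i \<otimes> y" using c ic by (simp add: r_distr)
      then show ?case using amodD(3)[OF Wam span_add(3,4)] by simp
    qed
    obtain w t where wt: "z = w \<oplus> t" "w \<in> W" "t \<in> span AA xs" using z unfolding X_def ssum_def by auto
    have c: "w \<in> carrier R" "t \<in> carrier R" using wt Wc amodD(1)[OF Sam] by auto
    have "i \<otimes> z = i \<otimes> w \<oplus> i \<otimes> t" unfolding wt(1) using c ic by (simp add: r_distr)
    then show ?thesis using amodD(3)[OF Wam Wmult[OF ic wt(2)] Sh[OF wt(3)]] by simp
  qed
  define C1 where "C1 = {J \<in> C. J0 \<subseteq> J}"
  have C1ne: "C1 \<noteq> {}" unfolding C1_def using J0(1) by auto
  have ch1: "chainS C1" using ch unfolding C1_def chainS_def by auto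
  have UC: "\<Union>C = \<Union>C1"
  proof
    show "\<Union>C \<subseteq> \<Union>C1"
    proof
      fix x assume "x \<in> \<Union>C"
      then obtain J where J: "J \<in> C" "x \<in> J" by auto
      have "J \<subseteq> J0 \<or> J0 \<subseteq> J" using ch J(1) J0(1) unfolding chainS_def by blast
      then show "x \<in> \<Union>C1"
      proof
        assume "J \<subseteq> J0" then show ?thesis using J(2) J0(1) unfolding C1_def by auto
      next
        assume "J0 \<subseteq> J" then show ?thesis using J unfolding C1_def by auto
      qed
    qed
    show "\<Union>C1 \<subseteq> \<Union>C" unfolding C1_def by auto
  qed
  have C1am: "\<And>J. J \<in> C1 \<Longrightarrow> amod J" using Jid unfolding C1_def by auto
  have h1: "\<Union>((\<lambda>Y. Y \<inter> II) ` C1) \<in> (\<lambda>Y. Y \<inter> II) ` C1"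
  proof (rule finite_length[OF xsfin xsc Wam])
    show "\<And>i z. i \<in> II \<Longrightarrow> z \<in> ssum W (span AA xs) \<Longrightarrow> i \<otimes> z \<in> W" using hyp unfolding X_def by blast
    show "(\<lambda>Y. Y \<inter> II) ` C1 \<noteq> {}" using C1ne by auto
    show "chainS ((\<lambda>Y. Y \<inter> II) ` C1)" by (rule chain_image[OF ch1]) auto
    fix Y assume "Y \<in> (\<lambda>Y. Y \<inter> II) ` C1"
    then obtain J where J: "J \<in> C1" "Y = J \<inter> II" by auto
    have JC: "J \<in> C" "J0 \<subseteq> J" using J(1) unfolding C1_def by auto
    have amJ: "amod J" using C1am[OF J(1)] .
    have "amod Y" using amod_inter[OF amJ II_amod] J(2) by simp
    moreover have "W \<subseteq> Y"
    proof
      fix w assume "w \<in> W"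
      then show "w \<in> Y" unfolding W_def
      proof (induction rule: span.induct)
        case span_zero then show ?case using J(2) amodD(2)[OF amJ] amodD(2)[OF II_amod] by auto
      next
        case (span_sm k g)
        have "g \<in> J" "g \<in> II" using span_sm(2) GJ JC(2) by auto
        then have "k \<otimes> g \<in> J" "k \<otimes> g \<in> II"
          using amodD(4)[OF amJ] II_sub_AA span_sm(1) ideal.I_r_closed[OF II_ideal span_sm(1)] II_carr by auto
        then show ?case using J(2) by auto
      next
        case (span_add x y)
        then show ?case using J(2) amodD(3)[OF amJ] amodD(3)[OF II_amod] by auto
      qed
    qed
    moreover have "Y \<subseteq> ssum W (span AA xs)"
    proof -
      have Yc: "Y \<subseteq> carrier R" using J(2) II_carr by auto
      have "Y \<subseteq> Idl Y" using genideal_self[OF Yc] .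
      also have "Idl Y \<subseteq> \<Union>E" unfolding E_def using JC(1) J(2) by auto
      also have "\<dots> \<subseteq> Idl G" using J0(2) IdlG by auto
      also have "\<dots> \<subseteq> X" using IdlX .
      finally show ?thesis unfolding X_def .
    qed
    ultimately show "amod Y \<and> W \<subseteq> Y \<and> Y \<subseteq> ssum W (span AA xs)" by blast
  qed
  have h2: "\<Union>((\<lambda>Y. ssum Y II) ` C1) \<in> (\<lambda>Y. ssum Y II) ` C1"
  proof (rule chain_two)
    show "chainS ((\<lambda>Y. ssum Y II) ` C1)" by (rule chain_image[OF ch1]) (rule ssum_mono, auto)
    show "(\<lambda>Y. ssum Y II) ` C1 \<noteq> {}" using C1ne by auto
    show "(\<lambda>Y. ssum Y II) ` C1 \<subseteq> {II, AA}"
    proof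
      fix Z assume "Z \<in> (\<lambda>Y. ssum Y II) ` C1"
      then obtain J where J: "J \<in> C1" "Z = ssum J II" by auto
      have JA: "J \<subseteq> AA" using Jid J(1) unfolding C1_def by auto
      have amJ: "amod J" using C1am[OF J(1)] .
      have Zam: "amod Z" using ssum_amod[OF amJ II_amod] J(2) by simp
      have "II \<subseteq> Z" using ssum_right[OF amJ II_carr] J(2) by simp
      moreover have ZA: "Z \<subseteq> AA" using ssum_sub[OF AA_amod JA II_sub_AA] J(2) by simp
      moreover have rep: "\<exists>x'\<in>II. \<exists>a\<in>AA. z = x' \<oplus> a \<otimes> \<one>" if "z \<in> AA" for z
      proof -
        have "z = \<zero> \<oplus> z \<otimes> \<one>" using that AA_c by simp
        then show ?thesis using that amodD(2)[OF II_amod] by blast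
      qed
      moreover have "\<And>i. i \<in> II \<Longrightarrow> i \<otimes> \<one> \<in> II" using II_carr by auto
      ultimately have "Z = II \<or> AA \<subseteq> Z" using two_valued[OF II_amod Zam _ _ one_closed] by blast
      then show "Z \<in> {II, AA}" using ZA by auto
    qed
  qed
  have "\<Union>C1 \<in> C1" by (rule modular_chain[OF C1ne ch1 C1am II_amod h1 h2])
  then show "\<Union>C \<in> C" using UC unfolding C1_def by auto
qed


lemma AA_cring: "cring (R\<lparr>carrier := AA\<rparr>)"
  using subcring_iff[OF AA_carr] subcringI'[OF AA_subring] by simp

lemma sub_idealI: assumes JA: "J \<subseteq> AA" and Jm: "amod J" shows "ideal J (R\<lparr>carrier := AA\<rparr>)"
proof -
  interpret S: ring "R\<lparr>carrier := AA\<rparr>" using subring_is_ring[OF AA_subring] .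
  show ?thesis
  proof (rule idealI[OF S.ring_axioms])
    show "subgroup J (add_monoid (R\<lparr>carrier := AA\<rparr>))"
    proof (rule S.add.subgroupI)
      show "J \<subseteq> carrier (R\<lparr>carrier := AA\<rparr>)" using JA by simp
      show "J \<noteq> {}" using amodD(2)[OF Jm] by auto
    next
      fix a assume a: "a \<in> J"
      have aA: "a \<in> carrier (R\<lparr>carrier := AA\<rparr>)" using a JA by auto
      have oA: "\<one>\<^bsub>R\<lparr>carrier := AA\<rparr>\<^esub> \<in> carrier (R\<lparr>carrier := AA\<rparr>)" by (rule S.one_closed)
      have "\<ominus>\<^bsub>R\<lparr>carrier := AA\<rparr>\<^esub> a = (\<ominus>\<^bsub>R\<lparr>carrier := AA\<rparr>\<^esub> \<one>\<^bsub>R\<lparr>carrier := AA\<rparr>\<^esub>) \<otimes>\<^bsub>R\<lparr>carrier := AA\<rparr>\<^esub> a"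
        using S.l_minus[OF oA aA] S.l_one[OF aA] by simp
      moreover have "\<ominus>\<^bsub>R\<lparr>carrier := AA\<rparr>\<^esub> \<one>\<^bsub>R\<lparr>carrier := AA\<rparr>\<^esub> \<in> AA"
        using S.a_inv_closed[OF oA] by simp
      ultimately show "\<ominus>\<^bsub>R\<lparr>carrier := AA\<rparr>\<^esub> a \<in> J" using amodD(4)[OF Jm _ a] by simp
    next
      fix a b assume "a \<in> J" "b \<in> J"
      then show "a \<oplus>\<^bsub>R\<lparr>carrier := AA\<rparr>\<^esub> b \<in> J" using amodD(3)[OF Jm] by simp
    qed
  next
    fix a x assume a: "a \<in> J" and x: "x \<in> carrier (R\<lparr>carrier := AA\<rparr>)"
    have xA: "x \<in> AA" using x by simp
    have xa: "x \<otimes> a \<in> J" by (rule amodD(4)[OF Jm xA a])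
    then show "x \<otimes>\<^bsub>R\<lparr>carrier := AA\<rparr>\<^esub> a \<in> J" by simp
    have "a \<otimes> x = x \<otimes> a" using m_comm AA_c[OF xA] a JA AA_c by blast
    then show "a \<otimes>\<^bsub>R\<lparr>carrier := AA\<rparr>\<^esub> x \<in> J" using xa by simp
  qed
qed

lemma ideal_amod: assumes P: "ideal P R" shows "amod P"
  unfolding amod_def
proof (intro conjI ballI)
  show "P \<subseteq> carrier R" by (rule additive_subgroup.a_subset[OF ideal.axioms(1)[OF P]])
  show "\<zero> \<in> P" by (rule additive_subgroup.zero_closed[OF ideal.axioms(1)[OF P]])
  show "x \<oplus> y \<in> P" if "x \<in> P" "y \<in> P" for x y by (rule additive_subgroup.a_closed[OF ideal.axioms(1)[OF P] that])
  show "a \<otimes> y \<in> P" if "a \<in> AA" "y \<in> P" for a y by (rule ideal.I_l_closed[OF P that(2) AA_c[OF that(1)]])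
qed

lemma contract_prime: assumes P: "primeideal P R" shows "primeideal (P \<inter> AA) (R\<lparr>carrier := AA\<rparr>)"
proof (rule primeidealI[OF sub_idealI AA_cring])
  have Pid: "ideal P R" using P primeideal.axioms(1) by blast
  show "P \<inter> AA \<subseteq> AA" by auto
  show "amod (P \<inter> AA)" using amod_inter[OF ideal_amod[OF Pid] AA_amod] .
  have "\<one> \<notin> P" using primeideal.I_notcarr[OF P] ideal.one_imp_carrier[OF Pid] by metis
  then show "carrier (R\<lparr>carrier := AA\<rparr>) \<noteq> P \<inter> AA" using AA_one by auto
  fix a b assume "a \<in> carrier (R\<lparr>carrier := AA\<rparr>)" "b \<in> carrier (R\<lparr>carrier := AA\<rparr>)"
    "a \<otimes>\<^bsub>R\<lparr>carrier := AA\<rparr>\<^esub> b \<in> P \<inter> AA"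
  then show "a \<in> P \<inter> AA \<or> b \<in> P \<inter> AA" using primeideal.I_prime[OF P] AA_c by auto
qed

lemma Ms_contract: "N \<in> Ms \<Longrightarrow> N \<inter> AA = II"
  using II_sub II_sub_AA AA_in_one by blast

lemma II_prime: "primeideal II (R\<lparr>carrier := AA\<rparr>)"
  using contract_prime[OF maximalideal_prime[OF Ms_max[OF M0]]] Ms_contract[OF M0] by simp

lemma one_notin_II: "\<one> \<notin> II"
proof
  assume "\<one> \<in> II"
  then have "\<one> \<in> M0" using II_sub[OF M0] by auto
  then show False using maximalideal.I_notcarr[OF Ms_max[OF M0]] ideal.one_imp_carrier[OF Ms_ideal[OF M0]] by metis
qed

lemma avoid: assumes Q: "primeideal Q R" and S: "finite S" "S \<subseteq> Ms" and h: "\<forall>N\<in>S. \<not> N \<subseteq> Q"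
  shows "\<exists>c\<in>carrier R. c \<notin> Q \<and> (\<forall>N\<in>S. c \<in> N)"
  using S h
proof (induction S rule: finite_induct)
  case empty
  have "\<one> \<notin> Q" using primeideal.I_notcarr[OF Q] ideal.one_imp_carrier[OF primeideal.axioms(1)[OF Q]] by metis
  then show ?case by auto
next
  case (insert N S)
  then obtain c where c: "c \<in> carrier R" "c \<notin> Q" "\<forall>N\<in>S. c \<in> N" by auto
  obtain n where n: "n \<in> N" "n \<notin> Q" using insert.prems by auto
  have NM: "N \<in> Ms" using insert.prems by auto
  have nc: "n \<in> carrier R" using n Ms_sub[OF NM] by auto
  have "c \<otimes> n \<notin> Q" using primeideal.I_prime[OF Q c(1) nc] c n by auto
  moreover have "\<forall>N'\<in>insert N S. c \<otimes> n \<in> N'"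
  proof
    fix N' assume N': "N' \<in> insert N S"
    show "c \<otimes> n \<in> N'"
    proof (cases "N' = N")
      case True then show ?thesis using ideal.I_l_closed[OF Ms_ideal[OF NM] n(1) c(1)] by simp
    next
      case False
      then have "N' \<in> S" "N' \<in> Ms" using N' insert.prems by auto
      then show ?thesis using ideal.I_r_closed[OF Ms_ideal _ nc] c by auto
    qed
  qed
  ultimately show ?case using c nc by blast
qed

lemma not_sup: assumes Q: "primeideal Q R" and QM: "Q \<notin> Ms"
  shows "\<exists>s\<in>II. s \<notin> Q"
proof -
  have "\<forall>N\<in>Ms. \<not> N \<subseteq> Q"
  proof (intro ballI notI)
    fix N assume N: "N \<in> Ms" and NQ: "N \<subseteq> Q"
    have Qc: "Q \<subseteq> carrier R" using idcarr[OF primeideal.axioms(1)[OF Q]] .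
    have "Q = N \<or> Q = carrier R"
      by (rule maximalideal.I_maximal[OF Ms_max[OF N] primeideal.axioms(1)[OF Q] NQ Qc])
    then show False using QM N primeideal.I_notcarr[OF Q] by auto
  qed
  then obtain c where "c \<in> carrier R" "c \<notin> Q" "\<forall>N\<in>Ms. c \<in> N" using avoid[OF Q Ms_fin subset_refl] by blast
  then show ?thesis unfolding II_def by blast
qed

lemma reflect: assumes P: "primeideal P R" and Q: "primeideal Q R" and QM: "Q \<notin> Ms"
  and sub: "P \<inter> AA \<subseteq> Q \<inter> AA" shows "P \<subseteq> Q"
proof
  fix r assume r: "r \<in> P"
  obtain s where s: "s \<in> II" "s \<notin> Q" using not_sup[OF Q QM] by blast
  have Pid: "ideal P R" using P primeideal.axioms(1) by blast
  have rc: "r \<in> carrier R" using r idcarr[OF Pid] by auto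
  have sc: "s \<in> carrier R" using s II_carr by auto
  have "s \<otimes> r \<in> II" using ideal.I_r_closed[OF II_ideal s(1) rc] .
  then have "s \<otimes> r \<in> AA" using II_sub_AA by auto
  moreover have "s \<otimes> r \<in> P" using ideal.I_l_closed[OF Pid r sc] .
  ultimately have "s \<otimes> r \<in> Q" using sub by auto
  then show "r \<in> Q" using primeideal.I_prime[OF Q sc rc] s by auto
qed

lemma below_II: assumes P: "primeideal P R" and sub: "P \<inter> AA \<subseteq> II"
  shows "\<exists>N\<in>Ms. P \<subseteq> N"
proof (rule ccontr)
  assume "\<not> (\<exists>N\<in>Ms. P \<subseteq> N)"
  then have "\<forall>N\<in>Ms. \<exists>p\<in>P. \<exists>c\<in>N. \<one> = p \<oplus> c"
    using comax_step[OF primeideal.axioms(1)[OF P]] by blast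
  then obtain p c where pc: "p \<in> P" "c \<in> carrier R" "\<forall>N\<in>Ms. c \<in> N" "\<one> = p \<oplus> c"
    using comax_fin[OF primeideal.axioms(1)[OF P] Ms_fin subset_refl] by blast
  have cI: "c \<in> II" using pc(3) unfolding II_def by blast
  have pcar: "p \<in> carrier R" using pc(1) idcarr[OF primeideal.axioms(1)[OF P]] by auto
  have "\<one> \<ominus> c = (p \<oplus> c) \<ominus> c" by (simp only: pc(4)[symmetric])
  also have "\<dots> = p" using pcar pc(2) by algebra
  finally have peq: "p = \<one> \<oplus> \<ominus> c" unfolding a_minus_def by simp
  have "\<ominus> c \<in> AA" using AA_neg II_sub_AA cI by auto
  then have "p \<in> AA" unfolding peq using AA_add[OF AA_one] by auto
  then have "p \<in> II" using sub pc(1) by auto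
  then have "p \<oplus> c \<in> II" using additive_subgroup.a_closed[OF ideal.axioms(1)[OF II_ideal] _ cI] by auto
  then show False using pc(4) one_notin_II by simp
qed

lemma prime_AA_cases: assumes p: "primeideal p (R\<lparr>carrier := AA\<rparr>)"
  shows "p = II \<or> (\<exists>P. primeideal P R \<and> P \<notin> Ms \<and> P \<inter> AA = p)"
proof -
  interpret S: ring "R\<lparr>carrier := AA\<rparr>" using subring_is_ring[OF AA_subring] .
  have pid: "ideal p (R\<lparr>carrier := AA\<rparr>)" using p primeideal.axioms(1) by blast
  have pA: "p \<subseteq> AA" and pm: "amod p" using sub_ideal[OF pid] by auto
  have one_np: "\<one> \<notin> p"
    using primeideal.I_notcarr[OF p] ideal.one_imp_carrier[OF pid] by fastforce
  have prime: "a \<in> p \<or> b \<in> p" if "a \<in> AA" "b \<in> AA" "a \<otimes> b \<in> p" for a b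
    using primeideal.I_prime[OF p] that by simp
  show ?thesis
  proof (cases "II \<subseteq> p")
    case True
    have "p \<subseteq> II"
    proof
      fix a assume a: "a \<in> p"
      show "a \<in> II"
      proof (rule ccontr)
        assume "a \<notin> II"
        then obtain b where b: "b \<in> AA" "a \<otimes> b \<ominus> \<one> \<in> II" using field_AA pA a by blast
        have ac: "a \<in> carrier R" using a pA AA_c by auto
        have bc: "b \<in> carrier R" using AA_c[OF b(1)] .
        have "a \<otimes> b \<in> p" using amodD(4)[OF pm b(1) a] m_comm[OF ac bc] by simp
        moreover have "a \<otimes> b \<ominus> \<one> \<in> p" using b(2) True by auto
        ultimately have "a \<otimes> b \<ominus> (a \<otimes> b \<ominus> \<one>) \<in> p" using amod_minus[OF pm] by blast
        moreover have "a \<otimes> b \<ominus> (a \<otimes> b \<ominus> \<one>) = \<one>" using ac bc by algebra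
        ultimately show False using one_np by simp
      qed
    qed
    then show ?thesis using True by auto
  next
    case False
    then obtain s where s: "s \<in> II" "s \<notin> p" by auto
    have sc: "s \<in> carrier R" using s II_carr by auto
    have sA: "s \<in> AA" using s II_sub_AA by auto
    define P where "P = {r \<in> carrier R. s \<otimes> r \<in> p}"
    have sI: "s \<otimes> x \<in> AA" if "x \<in> carrier R" for x using ideal.I_r_closed[OF II_ideal s(1) that] II_sub_AA by auto
    have key: "x \<in> p" if x: "x \<in> AA" and sx: "s \<otimes> x \<in> p" for x
      using prime[OF sA x sx] s(2) by auto
    have Pm: "amod P" unfolding amod_def P_def
    proof (intro conjI ballI)
      show "\<zero> \<in> {r \<in> carrier R. s \<otimes> r \<in> p}" using amodD(2)[OF pm] sc by simp
      fix x y assume x: "x \<in> {r \<in> carrier R. s \<otimes> r \<in> p}" and y: "y \<in> {r \<in> carrier R. s \<otimes> r \<in> p}"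
      have "s \<otimes> (x \<oplus> y) = s \<otimes> x \<oplus> s \<otimes> y" using x y sc by (simp add: r_distr)
      then show "x \<oplus> y \<in> {r \<in> carrier R. s \<otimes> r \<in> p}" using x y amodD(3)[OF pm] by auto
    next
      fix a y assume a: "a \<in> AA" and y: "y \<in> {r \<in> carrier R. s \<otimes> r \<in> p}"
      have ac: "a \<in> carrier R" using AA_c[OF a] .
      have "s \<otimes> (a \<otimes> y) = a \<otimes> (s \<otimes> y)" using y ac sc by (simp add: m_lcomm)
      then show "a \<otimes> y \<in> {r \<in> carrier R. s \<otimes> r \<in> p}" using amodD(4)[OF pm a] y ac by auto
    qed auto
    have Pmult: "r \<otimes> x \<in> P" if r: "r \<in> carrier R" and x: "x \<in> P" for r x
    proof -
      have xc: "x \<in> carrier R" "s \<otimes> x \<in> p" using x unfolding P_def by auto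
      have "(s \<otimes> r) \<otimes> (s \<otimes> x) \<in> p" using amodD(4)[OF pm sI[OF r] xc(2)] .
      moreover have "(s \<otimes> r) \<otimes> (s \<otimes> x) = s \<otimes> (s \<otimes> (r \<otimes> x))" using sc r xc by algebra
      ultimately have "s \<otimes> (r \<otimes> x) \<in> p" using key[OF sI] r xc by auto
      then show ?thesis unfolding P_def using r xc by auto
    qed
    have Pid: "ideal P R" using amod_ideal[OF Pm Pmult] .
    have Pprime: "primeideal P R"
    proof (rule primeidealI[OF Pid is_cring])
      have "\<one> \<notin> P" using s(2) sc unfolding P_def by auto
      then show "carrier R \<noteq> P" by auto
      fix a b assume a: "a \<in> carrier R" and b: "b \<in> carrier R" and ab: "a \<otimes> b \<in> P"
      have "(s \<otimes> a) \<otimes> (s \<otimes> b) \<in> p" using amodD(4)[OF pm sA] ab unfolding P_def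
        using sc a b by (metis (no_types, lifting) mem_Collect_eq m_closed m_assoc m_lcomm)
      then have "s \<otimes> a \<in> p \<or> s \<otimes> b \<in> p" using prime sI a b by auto
      then show "a \<in> P \<or> b \<in> P" unfolding P_def using a b by auto
    qed
    have PA: "P \<inter> AA = p"
    proof
      show "P \<inter> AA \<subseteq> p" unfolding P_def using key by auto
      show "p \<subseteq> P \<inter> AA"
      proof
        fix x assume x: "x \<in> p"
        have "s \<otimes> x \<in> p" using amodD(4)[OF pm sA x] .
        then show "x \<in> P \<inter> AA" unfolding P_def using x pA AA_c by auto
      qed
    qed
    have "P \<notin> Ms"
    proof
      assume "P \<in> Ms"
      then have "p = II" using Ms_contract PA by auto
      then show False using s by auto
    qed
    then show ?thesis using Pprime PA by blast
  qed
qed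

end

lemma (in noetherian_ring) exists_max:
  assumes I: "ideal I R" and ne: "I \<noteq> carrier R"
  shows "\<exists>K. maximalideal K R \<and> I \<subseteq> K"
proof -
  define S where "S = {J. ideal J R \<and> I \<subseteq> J \<and> J \<noteq> carrier R}"
  have "\<exists>K\<in>S. \<forall>X\<in>S. K \<subseteq> X \<longrightarrow> X = K"
  proof (rule subset_Zorn)
    fix C assume C: "subset.chain S C"
    show "\<exists>U\<in>S. \<forall>X\<in>C. X \<subseteq> U"
    proof (cases "C = {}")
      case True then show ?thesis using I ne unfolding S_def by auto
    next
      case False
      have "subset.chain {J. ideal J R} C" using C unfolding pred_on.chain_def S_def by blast
      then have "\<Union>C \<in> C" by (rule ideal_chain_is_trivial[OF False])
      then have "\<Union>C \<in> S" using C unfolding pred_on.chain_def by blast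
      then show ?thesis by blast
    qed
  qed
  then obtain K where K: "K \<in> S" "\<And>X. X \<in> S \<Longrightarrow> K \<subseteq> X \<Longrightarrow> X = K" by blast
  have "maximalideal K R"
  proof (rule maximalidealI)
    show "ideal K R" using K(1) unfolding S_def by auto
    show "carrier R \<noteq> K" using K(1) unfolding S_def by auto
    fix J assume J: "ideal J R" "K \<subseteq> J" "J \<subseteq> carrier R"
    show "J = K \<or> J = carrier R"
    proof (cases "J = carrier R")
      case False
      then have "J \<in> S" using J K(1) unfolding S_def by auto
      then show ?thesis using K(2) J(2) by auto
    qed auto
  qed
  then show ?thesis using K(1) unfolding S_def by auto
qed

theorem theorem6p1:
  fixes V :: "'v set" and leV :: "'v \<Rightarrow> 'v \<Rightarrow> bool" and m :: 'v
    and U :: "'u set" and leU :: "'u \<Rightarrow> 'u \<Rightarrow> bool" and \<phi> :: "'u \<Rightarrow> 'v"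
    and R :: "('a, 'b) ring_scheme"
  assumes "is_poset V leV"
    and "is_maximal_node V leV m"
    and "node_height V leV m > 0"
    and "is_splitting V leV m U leU \<phi>"
    and "cring R" and "noetherian_ring R"
    and "poset_iso U leU (Spec R) (\<subseteq>)"
    and "\<And>M N. maximalideal M R \<Longrightarrow> maximalideal N R \<Longrightarrow> R Quot M \<simeq> R Quot N"
  shows "\<exists>L. subring L R \<and> noetherian_ring (R\<lparr>carrier := L\<rparr>) \<and>
             poset_iso (Spec (R\<lparr>carrier := L\<rparr>)) (\<subseteq>) V leV"
proof -
  interpret noetherian_ring R by fact
  interpret cring R by fact
  note posV = assms(1)[unfolded is_poset_def]
  have mV: "m \<in> V" and mmax: "\<And>y. y \<in> V \<Longrightarrow> leV m y \<Longrightarrow> y = m"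
    using assms(2) unfolding is_maximal_node_def by auto
  from assms(7) obtain f where fbij: "bij_betw f U (Spec R)"
    and ford: "\<And>x y. x \<in> U \<Longrightarrow> y \<in> U \<Longrightarrow> leU x y \<longleftrightarrow> f x \<subseteq> f y"
    unfolding poset_iso_def by blast
  have finj: "inj_on f U" and fim: "f ` U = Spec R" using fbij unfolding bij_betw_def by auto
  have fprime: "\<And>x. x \<in> U \<Longrightarrow> primeideal (f x) R" using fim unfolding Spec_def by auto
  have fsurj: "\<And>P. primeideal P R \<Longrightarrow> \<exists>x\<in>U. P = f x" using fim unfolding Spec_def by auto
  note spl = assms(4)[unfolded is_splitting_def]
  have phiV: "\<phi> ` U = V" using spl by blast
  have phimono: "\<And>x y. x \<in> U \<Longrightarrow> y \<in> U \<Longrightarrow> leU x y \<Longrightarrow> leV (\<phi> x) (\<phi> y)" using spl by blast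
  have fib: "\<And>v. v \<in> V \<Longrightarrow> v \<noteq> m \<Longrightarrow> card {x\<in>U. \<phi> x = v} = 1" using spl by blast
  have lift: "\<And>x' y. x' \<in> U \<Longrightarrow> y \<in> V \<Longrightarrow> leV (\<phi> x') y \<Longrightarrow> \<exists>y'\<in>U. leU x' y' \<and> \<phi> y' = y"
    using spl by blast
  have s4: "\<exists>M. finite M \<and> M \<noteq> {} \<and>
        (\<forall>x\<in>M. is_maximal_node U leU x \<and> node_height U leU x > 0) \<and>
        {x\<in>U. \<phi> x = m} = M" using spl by (elim conjE)
  then obtain M where M0': "finite M" "M \<noteq> {}" "\<forall>x\<in>M. is_maximal_node U leU x \<and> node_height U leU x > 0"
    "{x\<in>U. \<phi> x = m} = M" by (elim exE conjE)
  have M: "finite M" "M \<noteq> {}" "\<And>x. x \<in> M \<Longrightarrow> is_maximal_node U leU x"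
    "{x\<in>U. \<phi> x = m} = M" using M0' by auto
  have MU: "M \<subseteq> U" using M(4) by auto
  have inM: "\<And>x. x \<in> U \<Longrightarrow> x \<in> M \<longleftrightarrow> \<phi> x = m" using M(4) by auto
  define Ms where "Ms = f ` M"
  have Msfin: "finite Ms" unfolding Ms_def using M(1) by auto
  have inMs: "\<And>x. x \<in> U \<Longrightarrow> f x \<in> Ms \<longleftrightarrow> x \<in> M"
    unfolding Ms_def using finj MU by (auto dest: inj_onD)
  have Msmax: "maximalideal N R" if N: "N \<in> Ms" for N
  proof -
    obtain x where x: "x \<in> M" "N = f x" using N unfolding Ms_def by auto
    have xU: "x \<in> U" using x MU by auto
    have Np: "primeideal N R" using fprime[OF xU] x by simp
    have "N \<noteq> carrier R" using primeideal.I_notcarr[OF Np] by auto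
    then obtain K where K: "maximalideal K R" "N \<subseteq> K"
      using exists_max[OF primeideal.axioms(1)[OF Np]] by blast
    obtain y where y: "y \<in> U" "K = f y" using fsurj[OF maximalideal_prime[OF K(1)]] by blast
    have "leU x y" using ford[OF xU y(1)] K(2) x y by simp
    then have "y = x" using M(3)[OF x(1)] y(1) unfolding is_maximal_node_def by blast
    then show ?thesis using K y x by simp
  qed
  obtain M0 where M0: "M0 \<in> Ms" using M(2) unfolding Ms_def by auto
  define \<theta> where "\<theta> N = (if N = M0 then id else (SOME h. h \<in> ring_iso (R Quot N) (R Quot M0)))" for N
  have thiso: "\<theta> N \<in> ring_iso (R Quot N) (R Quot M0)" if N: "N \<in> Ms" for N
  proof (cases "N = M0")
    case True then show ?thesis unfolding \<theta>_def using ring_iso_set_refl by simp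
  next
    case False
    have "R Quot N \<simeq> R Quot M0" using assms(8)[OF Msmax[OF N] Msmax[OF M0]] .
    then have "\<exists>h. h \<in> ring_iso (R Quot N) (R Quot M0)" unfolding is_ring_iso_def by auto
    then have "(SOME h. h \<in> ring_iso (R Quot N) (R Quot M0)) \<in> ring_iso (R Quot N) (R Quot M0)" by (rule someI_ex)
    then show ?thesis unfolding \<theta>_def using False by simp
  qed
  have thM0: "\<And>x. \<theta> M0 x = x" unfolding \<theta>_def by simp
  have gl: "glue R Ms M0 \<theta>"
    by (rule glue.intro[OF assms(6) assms(5) glue_axioms.intro[OF Msfin M0 Msmax thiso thM0]])
  interpret G: glue R Ms M0 \<theta> by (rule gl)
  define uv where "uv v = (THE u. u \<in> U \<and> \<phi> u = v)" for v
  have uv: "uv v \<in> U \<and> \<phi> (uv v) = v \<and> (\<forall>u\<in>U. \<phi> u = v \<longrightarrow> u = uv v)" if v: "v \<in> V" "v \<noteq> m" for v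
  proof -
    obtain a where a: "{x\<in>U. \<phi> x = v} = {a}" using fib[OF v] by (metis card_1_singletonE)
    have "\<And>u. u \<in> U \<and> \<phi> u = v \<longleftrightarrow> u = a" using a by blast
    then have "\<exists>!u. u \<in> U \<and> \<phi> u = v" by (intro ex1I[of _ a]) auto
    then have "uv v \<in> U \<and> \<phi> (uv v) = v" unfolding uv_def by (rule theI')
    moreover have "\<forall>u\<in>U. \<phi> u = v \<longrightarrow> u = uv v" using \<open>\<And>u. u \<in> U \<and> \<phi> u = v \<longleftrightarrow> u = a\<close> \<open>uv v \<in> U \<and> \<phi> (uv v) = v\<close> by metis
    ultimately show ?thesis by blast
  qed
  have Pv: "primeideal (f (uv v)) R \<and> f (uv v) \<notin> Ms" if v: "v \<in> V" "v \<noteq> m" for v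
    using uv[OF v] fprime inMs inM v(2) by auto
  define g where "g v = (if v = m then G.II else f (uv v) \<inter> G.AA)" for v
  have ord: "leV v w \<longleftrightarrow> g v \<subseteq> g w" if v: "v \<in> V" and w: "w \<in> V" for v w
  proof (cases "v = m")
    case vm: True
    show ?thesis
    proof (cases "w = m")
      case True then show ?thesis using vm posV mV by auto
    next
      case wm: False
      have "\<not> leV v w" using mmax[OF w] vm wm by auto
      moreover have "\<not> g v \<subseteq> g w"
      proof
        assume "g v \<subseteq> g w"
        then have "G.II \<subseteq> f (uv w)" unfolding g_def using vm wm by auto
        then show False using G.not_sup[of "f (uv w)"] Pv[OF w wm] by blast
      qed
      ultimately show ?thesis by simp
    qed
  next
    case vm: False
    note uvv = uv[OF v vm]
    show ?thesis
    proof (cases "w = m")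
      case wm: True
      show ?thesis
      proof
        assume "leV v w"
        then obtain y' where y': "y' \<in> U" "leU (uv v) y'" "\<phi> y' = m" using lift[of "uv v" w] uvv w wm by auto
        have "f y' \<in> Ms" using inMs[OF y'(1)] inM[OF y'(1)] y'(3) by simp
        moreover have "f (uv v) \<subseteq> f y'" using ford[OF _ y'(1)] uvv y'(2) by blast
        ultimately have "f (uv v) \<inter> G.AA \<subseteq> G.II" using G.Ms_contract by blast
        then show "g v \<subseteq> g w" unfolding g_def using vm wm by simp
      next
        assume "g v \<subseteq> g w"
        then have "f (uv v) \<inter> G.AA \<subseteq> G.II" unfolding g_def using vm wm by simp
        then obtain N where N: "N \<in> Ms" "f (uv v) \<subseteq> N" using G.below_II Pv[OF v vm] by blast
        obtain y where y: "y \<in> M" "N = f y" using N(1) unfolding Ms_def by auto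
        have yU: "y \<in> U" using y MU by auto
        have "leU (uv v) y" using ford[OF _ yU] uvv N(2) y by blast
        then have "leV (\<phi> (uv v)) (\<phi> y)" using phimono uvv yU by blast
        then show "leV v w" using uvv inM[OF yU] y(1) wm by simp
      qed
    next
      case wm: False
      note uvw = uv[OF w wm]
      show ?thesis
      proof
        assume "leV v w"
        then obtain y' where y': "y' \<in> U" "leU (uv v) y'" "\<phi> y' = w" using lift[of "uv v" w] uvv w by auto
        have "y' = uv w" using uvw y' by blast
        then have "f (uv v) \<subseteq> f (uv w)" using ford uvv uvw y' by blast
        then show "g v \<subseteq> g w" unfolding g_def using vm wm by auto
      next
        assume "g v \<subseteq> g w"
        then have "f (uv v) \<inter> G.AA \<subseteq> f (uv w) \<inter> G.AA" unfolding g_def using vm wm by simp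
        then have "f (uv v) \<subseteq> f (uv w)" using G.reflect Pv[OF v vm] Pv[OF w wm] by blast
        then have "leU (uv v) (uv w)" using ford uvv uvw by blast
        then show "leV v w" using phimono uvv uvw by metis
      qed
    qed
  qed
  have gSpec: "g v \<in> Spec (R\<lparr>carrier := G.AA\<rparr>)" if v: "v \<in> V" for v
  proof (cases "v = m")
    case True then show ?thesis unfolding g_def Spec_def using G.II_prime by simp
  next
    case False then show ?thesis unfolding g_def Spec_def using G.contract_prime Pv[OF v False] by simp
  qed
  have ginj: "inj_on g V"
  proof (rule inj_onI)
    fix v w assume vw: "v \<in> V" "w \<in> V" "g v = g w"
    then have "leV v w" "leV w v" using ord by auto
    then show "v = w" using posV vw by blast
  qed
  have gsurj: "Spec (R\<lparr>carrier := G.AA\<rparr>) \<subseteq> g ` V"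
  proof
    fix p assume "p \<in> Spec (R\<lparr>carrier := G.AA\<rparr>)"
    then have p: "primeideal p (R\<lparr>carrier := G.AA\<rparr>)" unfolding Spec_def by simp
    show "p \<in> g ` V"
    proof (cases "p = G.II")
      case True then show ?thesis unfolding g_def using mV by force
    next
      case False
      then obtain P where P: "primeideal P R" "P \<notin> Ms" "P \<inter> G.AA = p" using G.prime_AA_cases[OF p] by blast
      obtain u where u: "u \<in> U" "P = f u" using fsurj[OF P(1)] by blast
      have um: "\<phi> u \<noteq> m" using inM[OF u(1)] inMs[OF u(1)] P(2) u(2) by auto
      have uvV: "\<phi> u \<in> V" using phiV u(1) by auto
      have "uv (\<phi> u) = u" using uv[OF uvV um] u(1) by auto
      then have "g (\<phi> u) = p" unfolding g_def using um P u by simp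
      then show ?thesis using uvV by force
    qed
  qed
  have gbij: "bij_betw g V (Spec (R\<lparr>carrier := G.AA\<rparr>))"
    unfolding bij_betw_def using ginj gsurj gSpec by auto
  have "poset_iso (Spec (R\<lparr>carrier := G.AA\<rparr>)) (\<subseteq>) V leV"
    unfolding poset_iso_def
  proof (intro exI conjI ballI)
    show "bij_betw (inv_into V g) (Spec (R\<lparr>carrier := G.AA\<rparr>)) V" using bij_betw_inv_into[OF gbij] .
    fix p q assume p: "p \<in> Spec (R\<lparr>carrier := G.AA\<rparr>)" and q: "q \<in> Spec (R\<lparr>carrier := G.AA\<rparr>)"
    have pg: "p \<in> g ` V" using p gsurj by blast
    have qg: "q \<in> g ` V" using q gsurj by blast
    have pv: "inv_into V g p \<in> V" "g (inv_into V g p) = p"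
      by (rule inv_into_into[OF pg], rule f_inv_into_f[OF pg])
    have qv: "inv_into V g q \<in> V" "g (inv_into V g q) = q"
      by (rule inv_into_into[OF qg], rule f_inv_into_f[OF qg])
    show "p \<subseteq> q \<longleftrightarrow> leV (inv_into V g p) (inv_into V g q)" using ord[OF pv(1) qv(1)] pv qv by simp
  qed
  then show ?thesis using G.AA_subring G.noeth_AA by blast
qed

end
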